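(* Consider the following regulation game. A random triple $(\theta,s,d)$ (agent type, training state, deployment state) has joint distribution $\pi$. Prediction functions are vectors $f\in\mathbb{R}^n$. Given $s$ (and $\theta$), expected agent utility and expected principal welfare are $\overline{U}_\theta(f;s) = -(f-\bar u)'\Omega(f-\bar u)$ and $\overline{W}(f;s) = -(f-\bar w)'\Omega(f-\bar w)$, with bliss points $\bar u=\bar u(s,\theta)$, $\bar w=\bar w(s)\in\mathbb{R}^n$ and a common fixed (non-random) symmetric positive definite weight matrix $\Omega$ (i.e. the agent's and principal's weight matrices coincide and equal $\Omega$). The principal first (knowing only $\pi$) chooses a linear explainer, a $k\times n$ real matrix $\mathcal{E}$, and possibly an ex-ante restriction $\{f: Af=a\}$ with $A\in\mathbb{R}^{m\times n}$, $a\in\mathbb{R}^m$ not depending on $s,\theta$; after observing $s$ she dictates the value $\mathcal{E}f=e(s)$ (failing the audit has infinite cost to the agent). The agent, knowing $\theta,s$, chooses $f$ maximizing $\overline{U}_\theta(f;s)$ subject to these constraints. A second-best solution is a choice of explainer, restriction and explanation values maximizing $\mathop{E}_\pi[\overline{W}(f;s)]$. Let $\lambda_{(i)}(M)$ denote the $i$-th highest eigenvalue of a symmetric matrix $M$. If $$\lambda_{(n)}\big(\operatorname{Var}_\pi(\Omega^{1/2}\bar w)\big)\ \ge\ \lambda_{(k+1)}\big(\mathop{E}_\pi[(\Omega^{1/2}(\bar u-\bar w))(\Omega^{1/2}(\bar u-\bar w))']\big),$$ then there is a second-best solution of the principal that does not involve any ex-ante restrictions. *)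

theory Defs
  imports "HOL-Analysis.Analysis" "HOL-Probability.Probability"
    "HOL-Computational_Algebra.Polynomial"
begin

definition sym_mat :: "real^'n^'n \<Rightarrow> bool" where
  "sym_mat M \<longleftrightarrow> transpose M = M"

definition pos_def_mat :: "real^'n^'n \<Rightarrow> bool" where
  "pos_def_mat M \<longleftrightarrow> sym_mat M \<and> (\<forall>x. x \<noteq> 0 \<longrightarrow> x \<bullet> (M *v x) > 0)"

definition psd_mat :: "real^'n^'n \<Rightarrow> bool" where
  "psd_mat M \<longleftrightarrow> sym_mat M \<and> (\<forall>x. x \<bullet> (M *v x) \<ge> 0)"

definition mat_sqrt :: "real^'n^'n \<Rightarrow> real^'n^'n" where
  "mat_sqrt M = (THE R. psd_mat R \<and> R ** R = M)"

definition char_poly_mat :: "real^'n^'n \<Rightarrow> real poly" where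
  "char_poly_mat M = det (\<chi> i j. (if i = j then [:0, 1:] else 0) - [: M $ i $ j :])"

text \<open>Eigenvalues with (algebraic) multiplicity, and the i-th highest one (1-based).\<close>
definition eigenvalues_mset :: "real^'n^'n \<Rightarrow> real multiset" where
  "eigenvalues_mset M = proots (char_poly_mat M)"

definition eig_desc :: "real^'n^'n \<Rightarrow> nat \<Rightarrow> real" where
  "eig_desc M i = rev (sorted_list_of_multiset (eigenvalues_mset M)) ! (i - 1)"

definition outer :: "real^'n \<Rightarrow> real^'n \<Rightarrow> real^'n^'n" where
  "outer x y = (\<chi> i j. x $ i * y $ j)"

definition quad :: "real^'n^'n \<Rightarrow> real^'n \<Rightarrow> real" where
  "quad \<Omega> x = x \<bullet> (\<Omega> *v x)"

text \<open>Explainer: k rows E 0..E (k-1); explanation values es i (i<k);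
  ex-ante restriction: m rows A 0..A (m-1) and right-hand side a.\<close>
definition feasible_set ::
  "nat \<Rightarrow> (nat \<Rightarrow> real^'n) \<Rightarrow> (nat \<Rightarrow> real) \<Rightarrow> nat \<Rightarrow> (nat \<Rightarrow> real^'n) \<Rightarrow> (nat \<Rightarrow> real)
   \<Rightarrow> (real^'n) set" where
  "feasible_set k E es m A a =
     {f. (\<forall>i<k. E i \<bullet> f = es i) \<and> (\<forall>j<m. A j \<bullet> f = a j)}"

definition agent_choice :: "real^'n^'n \<Rightarrow> real^'n \<Rightarrow> (real^'n) set \<Rightarrow> real^'n" where
  "agent_choice \<Omega> u F =
     (THE f. f \<in> F \<and> (\<forall>g\<in>F. - quad \<Omega> (g - u) \<le> - quad \<Omega> (f - u)))"

text \<open>Expected principal loss = - E[W], as a nonnegative extended real.\<close>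
definition expected_loss ::
  "'w measure \<Rightarrow> ('w \<Rightarrow> 's) \<Rightarrow> ('w \<Rightarrow> 't) \<Rightarrow> ('s \<Rightarrow> 't \<Rightarrow> real^'n) \<Rightarrow> ('s \<Rightarrow> real^'n)
   \<Rightarrow> real^'n^'n \<Rightarrow> nat \<Rightarrow> (nat \<Rightarrow> real^'n) \<Rightarrow> ('s \<Rightarrow> nat \<Rightarrow> real)
   \<Rightarrow> nat \<Rightarrow> (nat \<Rightarrow> real^'n) \<Rightarrow> (nat \<Rightarrow> real) \<Rightarrow> ennreal" where
  "expected_loss M S \<Theta> ub wb \<Omega> k E e m A a =
     (\<integral>\<^sup>+ \<omega>. ennreal (quad \<Omega>
        (agent_choice \<Omega> (ub (S \<omega>) (\<Theta> \<omega>)) (feasible_set k E (e (S \<omega>)) m A a) - wb (S \<omega>))) \<partial>M)"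

text \<open>Admissible policy: explanation values measurable in s, and the audit can be
  passed (constraints feasible) in every state.\<close>
definition admissible ::
  "'w measure \<Rightarrow> ('w \<Rightarrow> 's) \<Rightarrow> 's measure \<Rightarrow> nat \<Rightarrow> (nat \<Rightarrow> real^'n) \<Rightarrow> ('s \<Rightarrow> nat \<Rightarrow> real)
   \<Rightarrow> nat \<Rightarrow> (nat \<Rightarrow> real^'n) \<Rightarrow> (nat \<Rightarrow> real) \<Rightarrow> bool" where
  "admissible M S Ms k E e m A a \<longleftrightarrow>
     (\<forall>i<k. (\<lambda>s. e s i) \<in> borel_measurable Ms) \<and>
     (\<forall>\<omega>\<in>space M. feasible_set k E (e (S \<omega>)) m A a \<noteq> {})"

definition second_best ::
  "'w measure \<Rightarrow> ('w \<Rightarrow> 's) \<Rightarrow> 's measure \<Rightarrow> ('w \<Rightarrow> 't) \<Rightarrow> ('s \<Rightarrow> 't \<Rightarrow> real^'n)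
   \<Rightarrow> ('s \<Rightarrow> real^'n) \<Rightarrow> real^'n^'n \<Rightarrow> nat \<Rightarrow> (nat \<Rightarrow> real^'n) \<Rightarrow> ('s \<Rightarrow> nat \<Rightarrow> real)
   \<Rightarrow> nat \<Rightarrow> (nat \<Rightarrow> real^'n) \<Rightarrow> (nat \<Rightarrow> real) \<Rightarrow> bool" where
  "second_best M S Ms \<Theta> ub wb \<Omega> k E e m A a \<longleftrightarrow>
     admissible M S Ms k E e m A a \<and>
     (\<forall>E' e' m' A' a'. admissible M S Ms k E' e' m' A' a' \<longrightarrow>
        expected_loss M S \<Theta> ub wb \<Omega> k E e m A a
          \<le> expected_loss M S \<Theta> ub wb \<Omega> k E' e' m' A' a')"

end

theory Submission
  imports Defs
begin

lemma sym_mat_inner: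
  assumes "sym_mat M" shows "(M *v x) \<bullet> y = x \<bullet> (M *v y)"
proof -
  have "M *v x = x v* M" using assms unfolding sym_mat_def
    by (metis transpose_matrix_vector)
  then show ?thesis by (simp add: dot_lmul_matrix)
qed

definition orthonormal_fam :: "(nat \<Rightarrow> real^'n) \<Rightarrow> nat \<Rightarrow> bool" where
  "orthonormal_fam v p \<longleftrightarrow> (\<forall>i<p. norm (v i) = 1) \<and> (\<forall>i<p. \<forall>j<p. i \<noteq> j \<longrightarrow> v i \<bullet> v j = 0)"

lemma orthonormal_fam_inj:
  assumes "orthonormal_fam v p" shows "inj_on v {..<p}"
proof (rule inj_onI)
  fix i j assume ij: "i \<in> {..<p}" "j \<in> {..<p}" "v i = v j"
  show "i = j"
  proof (rule ccontr)
    assume "i \<noteq> j"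
    then have "v i \<bullet> v j = 0" using assms ij unfolding orthonormal_fam_def by blast
    moreover have "v i \<bullet> v i = 1" using assms ij unfolding orthonormal_fam_def
      by (simp add: norm_eq_1)
    ultimately show False using ij by simp
  qed
qed

lemma orthonormal_fam_span:
  fixes v :: "nat \<Rightarrow> real^'n"
  assumes "orthonormal_fam v CARD('n)"
  shows "span (v ` {..<CARD('n)}) = UNIV"
proof -
  let ?B = "v ` {..<CARD('n)}"
  have card: "card ?B = CARD('n)"
    using orthonormal_fam_inj[OF assms] by (simp add: card_image)
  have "pairwise orthogonal ?B"
    using assms unfolding orthonormal_fam_def pairwise_def orthogonal_def by auto
  moreover have "0 \<notin> ?B" using assms unfolding orthonormal_fam_def by auto
  ultimately have ind: "independent ?B" by (rule pairwise_orthogonal_independent)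
  have "dim (UNIV :: (real^'n) set) \<le> card ?B" using card by simp
  then have "UNIV \<subseteq> span ?B" using card_ge_dim_independent[OF _ ind] by blast
  then show ?thesis by auto
qed

lemma orthonormal_fam_expand:
  fixes v :: "nat \<Rightarrow> real^'n"
  assumes "orthonormal_fam v CARD('n)"
  shows "x = (\<Sum>i<CARD('n). (v i \<bullet> x) *\<^sub>R v i)"
proof -
  let ?n = "CARD('n)"
  define z where "z = x - (\<Sum>i<?n. (v i \<bullet> x) *\<^sub>R v i)"
  have orth: "z \<bullet> v j = 0" if "j < ?n" for j
  proof -
    have "(\<Sum>i<?n. (v i \<bullet> x) *\<^sub>R v i) \<bullet> v j = (\<Sum>i<?n. (v i \<bullet> x) * (v i \<bullet> v j))"
      by (simp add: inner_sum_left)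
    also have "\<dots> = (\<Sum>i\<in>{j}. (v i \<bullet> x) * (v i \<bullet> v j))"
      using assms that unfolding orthonormal_fam_def
      by (intro sum.mono_neutral_right) auto
    also have "\<dots> = v j \<bullet> x" using assms that unfolding orthonormal_fam_def
      by (simp add: norm_eq_1)
    finally have eq: "(\<Sum>i<?n. (v i \<bullet> x) *\<^sub>R v i) \<bullet> v j = v j \<bullet> x" .
    show ?thesis unfolding z_def inner_diff_left eq by (simp add: inner_commute)
  qed
  have "z \<in> span (v ` {..<?n})" using orthonormal_fam_span[OF assms] by auto
  then have "orthogonal z z"
    by (rule orthogonal_to_span) (auto simp: orthogonal_def orth)
  then have "z = 0" by (simp add: orthogonal_def)
  then show ?thesis unfolding z_def by simp
qed

lemma orthonormal_fam_parseval:
  fixes v :: "nat \<Rightarrow> real^'n"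
  assumes "orthonormal_fam v CARD('n)"
  shows "x \<bullet> x = (\<Sum>i<CARD('n). (v i \<bullet> x)^2)"
proof -
  have "x \<bullet> x = x \<bullet> (\<Sum>i<CARD('n). (v i \<bullet> x) *\<^sub>R v i)"
    using orthonormal_fam_expand[OF assms, of x] by simp
  also have "\<dots> = (\<Sum>i<CARD('n). (v i \<bullet> x)^2)"
    by (simp add: inner_sum_right power2_eq_square inner_commute)
  finally show ?thesis .
qed

lemma quad_form_zero:
  fixes c d :: real
  assumes all: "\<And>t. 2*t*c + t^2*d \<le> 0" and c: "c \<ge> 0"
  shows "c = 0"
proof -
  define a where "a = \<bar>d\<bar> + 1"
  have a: "a > 0" unfolding a_def by simp
  have "2*(c/a)*c + (c/a)^2*d \<le> 0" by (rule all)
  then have "(2*(c/a)*c + (c/a)^2*d) * a^2 \<le> 0" using a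
    by (simp add: mult_nonpos_nonneg)
  moreover have "(2*(c/a)*c + (c/a)^2*d) * a^2 = c^2 * (2*a + d)" using a
    by (simp add: field_simps power2_eq_square)
  ultimately have "c^2 * (2*a + d) \<le> 0" by simp
  moreover have "2*a + d > 0" unfolding a_def by (cases "d \<ge> 0") auto
  ultimately have "c^2 \<le> 0" by (simp add: mult_le_0_iff)
  then show ?thesis using c by simp
qed

lemma spectral_aux:
  fixes M :: "real^'n^'n"
  assumes sym: "sym_mat M" and j: "j \<le> CARD('n)"
  shows "\<exists>v \<mu>. orthonormal_fam v j \<and> (\<forall>i<j. M *v v i = \<mu> i *\<^sub>R v i) \<and>
     (\<forall>i<j. \<forall>x. (\<forall>l<i. x \<bullet> v l = 0) \<longrightarrow> x \<bullet> (M *v x) \<le> \<mu> i * (x \<bullet> x))"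
  using j
proof (induction j)
  case 0 show ?case by (auto simp: orthonormal_fam_def)
next
  case (Suc j)
  then obtain v \<mu> where on: "orthonormal_fam v j" and eig: "\<forall>i<j. M *v v i = \<mu> i *\<^sub>R v i"
    and mx: "\<forall>i<j. \<forall>x. (\<forall>l<i. x \<bullet> v l = 0) \<longrightarrow> x \<bullet> (M *v x) \<le> \<mu> i * (x \<bullet> x)"
    by auto
  have jn: "j < CARD('n)" using Suc.prems by simp
  define S where "S = sphere (0::real^'n) 1 \<inter> {x. \<forall>l<j. x \<bullet> v l = 0}"
  have "{x::real^'n. \<forall>l<j. x \<bullet> v l = 0} = (\<Inter>l\<in>{..<j}. {x. v l \<bullet> x = 0})"
    by (auto simp: inner_commute)
  then have "closed {x::real^'n. \<forall>l<j. x \<bullet> v l = 0}"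
    by (simp add: closed_INT closed_hyperplane)
  then have cS: "compact S" unfolding S_def by (intro compact_Int_closed compact_sphere)
  have "dim (v ` {..<j}) \<le> card (v ` {..<j})" by (rule dim_le_card') simp
  also have "\<dots> \<le> j" by (metis card_image_le card_lessThan finite_lessThan)
  finally have "dim (v ` {..<j}) < DIM(real^'n)" using jn by simp
  then obtain y where y0: "y \<noteq> 0" and yo: "\<And>w. w \<in> span (v ` {..<j}) \<Longrightarrow> orthogonal y w"
    using orthogonal_to_subspace_exists by blast
  have "y /\<^sub>R norm y \<in> S" using y0 yo unfolding S_def
    by (auto simp: orthogonal_def intro!: span_base)
  then have neS: "S \<noteq> {}" by auto
  have "continuous_on S (\<lambda>x. x \<bullet> (M *v x))" by (intro continuous_intros)
  then obtain x where xS: "x \<in> S" and xmax: "\<And>y. y \<in> S \<Longrightarrow> y \<bullet> (M *v y) \<le> x \<bullet> (M *v x)"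
    using continuous_attains_sup[OF cS neS] by blast
  define m where "m = x \<bullet> (M *v x)"
  have xx: "x \<bullet> x = 1" using xS unfolding S_def by (simp add: norm_eq_1)
  have xo: "\<And>l. l < j \<Longrightarrow> x \<bullet> v l = 0" using xS unfolding S_def by auto
  have hmax: "y \<bullet> (M *v y) \<le> m * (y \<bullet> y)" if yo: "\<forall>l<j. y \<bullet> v l = 0" for y
  proof (cases "y = 0")
    case True then show ?thesis by simp
  next
    case False
    have "y /\<^sub>R norm y \<in> S" using False yo unfolding S_def by auto
    then have "(y /\<^sub>R norm y) \<bullet> (M *v (y /\<^sub>R norm y)) \<le> m" unfolding m_def by (rule xmax)
    then have "(y \<bullet> (M *v y)) / (norm y)^2 \<le> m"
      by (simp add: matrix_vector_mult_scaleR power2_eq_square divide_inverse mult_ac)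
    then have "y \<bullet> (M *v y) \<le> m * (norm y)^2" using False by (simp add: divide_le_eq)
    then show ?thesis by (simp add: power2_norm_eq_inner)
  qed
  define z where "z = M *v x - m *\<^sub>R x"
  have zo: "z \<bullet> v l = 0" if "l < j" for l
  proof -
    have "(M *v x) \<bullet> v l = x \<bullet> (M *v v l)" by (rule sym_mat_inner[OF sym])
    also have "\<dots> = \<mu> l * (x \<bullet> v l)" using eig that by simp
    finally show ?thesis unfolding z_def using xo[OF that] by (simp add: inner_diff_left)
  qed
  have Mxx: "(M *v x) \<bullet> x = m" unfolding m_def by (rule inner_commute)
  have zx: "z \<bullet> x = 0" unfolding z_def using xx Mxx by (simp add: inner_diff_left)
  have zMx: "z \<bullet> (M *v x) = z \<bullet> z"
  proof -
    have "M *v x = z + m *\<^sub>R x" unfolding z_def by simp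
    then show ?thesis using zx by (simp add: inner_add_right)
  qed
  have xMz: "x \<bullet> (M *v z) = z \<bullet> z"
    using zMx sym_mat_inner[OF sym, of x z] by (simp add: inner_commute)
  have "2*t*(z \<bullet> z) + t^2*(z \<bullet> (M *v z) - m * (z \<bullet> z)) \<le> 0" for t
  proof -
    have "\<forall>l<j. (x + t *\<^sub>R z) \<bullet> v l = 0" using xo zo by (simp add: inner_add_left)
    then have h: "(x + t *\<^sub>R z) \<bullet> (M *v (x + t *\<^sub>R z)) \<le> m * ((x + t *\<^sub>R z) \<bullet> (x + t *\<^sub>R z))"
      by (rule hmax)
    have e1: "(x + t *\<^sub>R z) \<bullet> (M *v (x + t *\<^sub>R z)) = m + 2*t*(z \<bullet> z) + t^2 * (z \<bullet> (M *v z))"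
      using zMx xMz by (simp add: matrix_vector_right_distrib matrix_vector_mult_scaleR inner_add_left
          inner_add_right m_def power2_eq_square algebra_simps)
    have e2: "(x + t *\<^sub>R z) \<bullet> (x + t *\<^sub>R z) = 1 + t^2 * (z \<bullet> z)"
      using xx zx by (simp add: inner_add_left inner_add_right inner_commute power2_eq_square algebra_simps)
    show ?thesis using h unfolding e1 e2 by (simp add: algebra_simps)
  qed
  then have "z \<bullet> z = 0" by (rule quad_form_zero) simp
  then have Mx: "M *v x = m *\<^sub>R x" unfolding z_def by simp
  show ?case
  proof (intro exI conjI)
    show "orthonormal_fam (v(j := x)) (Suc j)"
      using on xx xo unfolding orthonormal_fam_def
      by (auto simp: less_Suc_eq norm_eq_1 inner_commute)
    show "\<forall>i<Suc j. M *v (v(j := x)) i = (\<mu>(j := m)) i *\<^sub>R (v(j := x)) i"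
      using eig Mx by (auto simp: less_Suc_eq)
    show "\<forall>i<Suc j. \<forall>y. (\<forall>l<i. y \<bullet> (v(j := x)) l = 0) \<longrightarrow> y \<bullet> (M *v y) \<le> (\<mu>(j := m)) i * (y \<bullet> y)"
      using mx hmax by (auto simp: less_Suc_eq)
  qed
qed

lemma spectral:
  fixes M :: "real^'n^'n"
  assumes sym: "sym_mat M"
  obtains v \<mu> where "orthonormal_fam v CARD('n)" "\<And>i. i < CARD('n) \<Longrightarrow> M *v v i = \<mu> i *\<^sub>R v i"
    "\<And>i j. i \<le> j \<Longrightarrow> j < CARD('n) \<Longrightarrow> \<mu> j \<le> \<mu> i"
proof -
  obtain v \<mu> where on: "orthonormal_fam v CARD('n)" and eig: "\<forall>i<CARD('n). M *v v i = \<mu> i *\<^sub>R v i"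
    and mx: "\<forall>i<CARD('n). \<forall>x. (\<forall>l<i. x \<bullet> v l = 0) \<longrightarrow> x \<bullet> (M *v x) \<le> \<mu> i * (x \<bullet> x)"
    using spectral_aux[OF sym, of "CARD('n)"] by auto
  have "\<mu> j \<le> \<mu> i" if "i \<le> j" "j < CARD('n)" for i j
  proof (cases "i = j")
    case False
    then have ij: "i < j" using that by simp
    have vv: "v j \<bullet> v j = 1" using on that unfolding orthonormal_fam_def by (simp add: norm_eq_1)
    have "\<forall>l<i. v j \<bullet> v l = 0" using on ij that unfolding orthonormal_fam_def by auto
    then have "v j \<bullet> (M *v v j) \<le> \<mu> i * (v j \<bullet> v j)" using mx ij that by auto
    moreover have "v j \<bullet> (M *v v j) = \<mu> j" using eig that vv by simp
    ultimately show ?thesis using vv by simp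
  qed simp
  then show ?thesis using that on eig by blast
qed

lemma spectral_apply:
  fixes M :: "real^'n^'n"
  assumes on: "orthonormal_fam v CARD('n)" and eig: "\<And>i. i < CARD('n) \<Longrightarrow> M *v v i = \<mu> i *\<^sub>R v i"
  shows "M *v x = (\<Sum>i<CARD('n). (\<mu> i * (v i \<bullet> x)) *\<^sub>R v i)"
proof -
  have "M *v x = M *v (\<Sum>i<CARD('n). (v i \<bullet> x) *\<^sub>R v i)"
    using orthonormal_fam_expand[OF on, of x] by simp
  also have "\<dots> = (\<Sum>i<CARD('n). (v i \<bullet> x) *\<^sub>R (M *v v i))"
    by (simp add: linear_sum[OF matrix_vector_mul_linear] matrix_vector_mult_scaleR)
  also have "\<dots> = (\<Sum>i<CARD('n). (\<mu> i * (v i \<bullet> x)) *\<^sub>R v i)"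
    by (intro sum.cong refl) (simp add: eig)
  finally show ?thesis .
qed

lemma spectral_quad:
  fixes M :: "real^'n^'n"
  assumes on: "orthonormal_fam v CARD('n)" and eig: "\<And>i. i < CARD('n) \<Longrightarrow> M *v v i = \<mu> i *\<^sub>R v i"
  shows "x \<bullet> (M *v x) = (\<Sum>i<CARD('n). \<mu> i * (v i \<bullet> x)^2)"
proof -
  have eq: "M *v x = (\<Sum>i<CARD('n). (\<mu> i * (v i \<bullet> x)) *\<^sub>R v i)"
    by (rule spectral_apply[OF on eig])
  show ?thesis unfolding eq
    by (simp add: inner_sum_right power2_eq_square inner_commute mult_ac)
qed

lemma const_poly_add: "[:a + b:] = [:a:] + [:b::'a::comm_monoid_add:]"
  by simp

lemma const_poly_sum: "[:sum f A:] = (\<Sum>x\<in>A. [:f x:])"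
proof (induction A rule: infinite_finite_induct)
  case (insert x F)
  have "[:sum f (insert x F):] = [:f x:] + [:sum f F:]" using insert(1,2) const_poly_add by simp
  then show ?case using insert by simp
qed auto

lemma const_poly_mult: "[:a:] * [:b:] = [:a * b::'a::comm_ring_1:]"
  by (simp add: mult.commute)

lemma orthonormal_rows:
  fixes v :: "nat \<Rightarrow> real^'n"
  assumes on: "orthonormal_fam v CARD('n)"
  shows "(\<Sum>i<CARD('n). v i $ r * v i $ s) = (if r = s then 1 else 0)"
proof -
  have "axis s 1 = (\<Sum>i<CARD('n). (v i \<bullet> axis s 1) *\<^sub>R v i)"
    by (rule orthonormal_fam_expand[OF on])
  then have "axis s (1::real) $ r = (\<Sum>i<CARD('n). (v i \<bullet> axis s 1) *\<^sub>R v i) $ r" by simp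
  moreover have "axis s (1::real) $ r = (if r = s then 1 else 0)" by (simp add: axis_def)
  ultimately show ?thesis by (simp add: inner_axis mult.commute)
qed

lemma spectral_entries:
  fixes M :: "real^'n^'n"
  assumes on: "orthonormal_fam v CARD('n)" and eig: "\<And>i. i < CARD('n) \<Longrightarrow> M *v v i = \<mu> i *\<^sub>R v i"
  shows "M $ r $ s = (\<Sum>i<CARD('n). v i $ r * \<mu> i * v i $ s)"
proof -
  have "M $ r $ s = (M *v axis s 1) $ r"
    by (simp add: matrix_vector_mult_def axis_def if_distrib cong: if_cong)
  also have "\<dots> = (\<Sum>i<CARD('n). (\<mu> i * (v i \<bullet> axis s 1)) *\<^sub>R v i) $ r"
    by (subst spectral_apply[OF on eig]) auto
  also have "\<dots> = (\<Sum>i<CARD('n). (\<mu> i * (v i $ s)) * v i $ r)"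
    by (simp add: inner_axis)
  also have "\<dots> = (\<Sum>i<CARD('n). v i $ r * \<mu> i * v i $ s)"
    by (simp add: mult_ac)
  finally show ?thesis .
qed

lemma char_poly_spectral:
  fixes M :: "real^'n^'n"
  assumes on: "orthonormal_fam v CARD('n)" and eig: "\<And>i. i < CARD('n) \<Longrightarrow> M *v v i = \<mu> i *\<^sub>R v i"
  shows "char_poly_mat M = (\<Prod>i<CARD('n). [:- \<mu> i, 1:])"
proof -
  let ?n = "CARD('n)"
  obtain \<psi> :: "'n \<Rightarrow> nat" where bij: "bij_betw \<psi> UNIV {..<?n}"
    using ex_bij_betw_finite_nat[of "UNIV :: 'n set"] by (auto simp: atLeast0LessThan)
  define X :: "real poly" where "X = [:0, 1:]"
  define PQ :: "real poly^'n^'n" where "PQ = (\<chi> r c. [: v (\<psi> c) $ r :])"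
  define PD :: "real poly^'n^'n" where "PD = (\<chi> r c. if r = c then X - [: \<mu> (\<psi> c) :] else 0)"
  have reidx: "(\<Sum>c\<in>UNIV. g (\<psi> c)) = (\<Sum>i<?n. g i)" for g :: "nat \<Rightarrow> real"
    using sum.reindex_bij_betw[OF bij] .
  have s1: "(\<Sum>c\<in>UNIV. v (\<psi> c) $ r * v (\<psi> c) $ s) = (if r = s then 1 else 0)" for r s
    using reidx[of "\<lambda>i. v i $ r * v i $ s"] orthonormal_rows[OF on, of r s] by simp
  have s2: "(\<Sum>c\<in>UNIV. v (\<psi> c) $ r * \<mu> (\<psi> c) * v (\<psi> c) $ s) = M $ r $ s" for r s
    using reidx[of "\<lambda>i. v i $ r * \<mu> i * v i $ s"] spectral_entries[OF on eig, of r s] by simp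
  have QQ: "PQ ** transpose PQ = mat 1"
  proof -
    have "(PQ ** transpose PQ) $ r $ s = (mat 1 :: real poly^'n^'n) $ r $ s" for r s
    proof -
      have "(PQ ** transpose PQ) $ r $ s = (\<Sum>c\<in>UNIV. [: v (\<psi> c) $ r * v (\<psi> c) $ s :])"
        by (simp add: matrix_matrix_mult_def PQ_def transpose_def) (simp add: mult.commute)
      also have "\<dots> = [: \<Sum>c\<in>UNIV. v (\<psi> c) $ r * v (\<psi> c) $ s :]"
        by (simp add: const_poly_sum)
      finally show ?thesis by (simp add: s1 mat_def)
    qed
    then show ?thesis by (simp add: vec_eq_iff)
  qed
  have CM: "(\<chi> i j. (if i = j then [:0, 1:] else 0) - [: M $ i $ j :]) = PQ ** PD ** transpose PQ"
  proof -
    have "(PQ ** PD ** transpose PQ) $ r $ s = (if r = s then X else 0) - [: M $ r $ s :]" for r s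
    proof -
      have "(PQ ** PD ** transpose PQ) $ r $ s =
          (\<Sum>c\<in>UNIV. [: v (\<psi> c) $ r :] * (X - [: \<mu> (\<psi> c) :]) * [: v (\<psi> c) $ s :])"
        by (simp add: matrix_matrix_mult_def PQ_def PD_def transpose_def if_distrib sum.delta cong: if_cong)
      also have "\<dots> = (\<Sum>c\<in>UNIV. [: v (\<psi> c) $ r * v (\<psi> c) $ s :] * X
                        - [: v (\<psi> c) $ r * \<mu> (\<psi> c) * v (\<psi> c) $ s :])"
        by (intro sum.cong refl) (simp add: algebra_simps smult_diff_right)
      also have "\<dots> = [: \<Sum>c\<in>UNIV. v (\<psi> c) $ r * v (\<psi> c) $ s :] * X
                        - [: \<Sum>c\<in>UNIV. v (\<psi> c) $ r * \<mu> (\<psi> c) * v (\<psi> c) $ s :]"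
        by (simp add: sum_subtractf sum_distrib_right const_poly_sum)
      also have "\<dots> = (if r = s then X else 0) - [: M $ r $ s :]"
        by (simp add: s1 s2)
      finally show ?thesis .
    qed
    then show ?thesis by (simp add: vec_eq_iff X_def)
  qed
  have dQ: "det PQ * det PQ = 1"
    using arg_cong[OF QQ, of det] by (simp add: det_mul)
  have dD: "det PD = (\<Prod>c\<in>UNIV. X - [: \<mu> (\<psi> c) :])"
    by (subst det_diagonal) (auto simp: PD_def)
  also have "\<dots> = (\<Prod>i<?n. X - [: \<mu> i :])"
    using prod.reindex_bij_betw[OF bij, of "\<lambda>i. X - [: \<mu> i :]"] .
  also have "\<dots> = (\<Prod>i<?n. [: - \<mu> i, 1 :])"
    by (intro prod.cong refl) (simp add: X_def)
  finally have dD': "det PD = (\<Prod>i<?n. [: - \<mu> i, 1 :])" .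
  have "char_poly_mat M = det PQ * det PD * det PQ"
    unfolding char_poly_mat_def CM by (simp add: det_mul)
  also have "\<dots> = det PD * (det PQ * det PQ)" by (simp add: mult_ac)
  finally show ?thesis using dQ dD' by simp
qed

lemma sum_single_mset: "(\<Sum>i<N. {#f i#}) = mset (map f [0..<N])"
  by (induction N) auto

lemma eig_desc_spectral:
  fixes M :: "real^'n^'n"
  assumes on: "orthonormal_fam v CARD('n)" and eig: "\<And>i. i < CARD('n) \<Longrightarrow> M *v v i = \<mu> i *\<^sub>R v i"
    and dec: "\<And>i j. i \<le> j \<Longrightarrow> j < CARD('n) \<Longrightarrow> \<mu> j \<le> \<mu> i"
    and i: "1 \<le> i" "i \<le> CARD('n)"
  shows "eig_desc M i = \<mu> (i - 1)"
proof -
  let ?n = "CARD('n)"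
  define L where "L = map \<mu> [0..<?n]"
  have "eigenvalues_mset M = proots (\<Prod>i<?n. [:- \<mu> i, 1:])"
    unfolding eigenvalues_mset_def using char_poly_spectral[OF on eig] by simp
  also have "\<dots> = (\<Sum>i<?n. proots [:- \<mu> i, 1:])"
    by (rule proots_prod) simp
  also have "\<dots> = (\<Sum>i<?n. {#\<mu> i#})" by simp
  also have "\<dots> = mset (rev L)" unfolding L_def sum_single_mset by simp
  finally have em: "eigenvalues_mset M = mset (rev L)" .
  have "sorted (rev L)"
    unfolding sorted_iff_nth_mono
  proof (intro allI impI)
    fix a b assume ab: "a \<le> b" "b < length (rev L)"
    then have "length L = ?n" "b < ?n" by (auto simp: L_def)
    then show "rev L ! a \<le> rev L ! b" using ab
      by (simp add: rev_nth L_def dec)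
  qed
  then have "sorted_list_of_multiset (eigenvalues_mset M) = rev L"
    unfolding em by (simp add: properties_for_sort)
  then have "eig_desc M i = L ! (i - 1)" unfolding eig_desc_def by simp
  then show ?thesis using i by (simp add: L_def)
qed

lemma onf_coeff:
  assumes on: "orthonormal_fam v p" and j: "j < p"
  shows "v j \<bullet> (\<Sum>i<p. c i *\<^sub>R v i) = c j"
proof -
  have "v j \<bullet> (\<Sum>i<p. c i *\<^sub>R v i) = (\<Sum>i<p. c i * (v j \<bullet> v i))"
    by (simp add: inner_sum_right)
  also have "\<dots> = (\<Sum>i\<in>{j}. c i * (v j \<bullet> v i))"
    using on j unfolding orthonormal_fam_def by (intro sum.mono_neutral_right) auto
  also have "\<dots> = c j" using on j unfolding orthonormal_fam_def by (simp add: norm_eq_1)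
  finally show ?thesis .
qed

lemma sum_outer_apply:
  fixes v :: "nat \<Rightarrow> real^'n"
  shows "(\<chi> r s. \<Sum>i<N. c i * v i $ r * v i $ s) *v x = (\<Sum>i<N. (c i * (v i \<bullet> x)) *\<^sub>R v i)"
proof -
  have "((\<chi> r s. \<Sum>i<N. c i * v i $ r * v i $ s) *v x) $ r = (\<Sum>i<N. (c i * (v i \<bullet> x)) *\<^sub>R v i) $ r" for r
  proof -
    have "((\<chi> r s. \<Sum>i<N. c i * v i $ r * v i $ s) *v x) $ r = (\<Sum>s\<in>UNIV. \<Sum>i<N. c i * v i $ r * v i $ s * x $ s)"
      by (simp add: matrix_vector_mult_def sum_distrib_right)
    also have "\<dots> = (\<Sum>i<N. \<Sum>s\<in>UNIV. c i * v i $ r * v i $ s * x $ s)"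
      by (rule sum.swap)
    also have "\<dots> = (\<Sum>i<N. (c i * (v i \<bullet> x)) *\<^sub>R v i) $ r"
      by (simp add: inner_vec_def sum_distrib_left mult_ac)
    finally show ?thesis .
  qed
  then show ?thesis by (simp add: vec_eq_iff)
qed

lemma expand_in_basis_eq:
  fixes A B :: "real^'n^'n"
  assumes on: "orthonormal_fam r CARD('n)" and eq: "\<And>j. j < CARD('n) \<Longrightarrow> A *v r j = B *v r j"
  shows "A = B"
proof -
  have "A *v x = B *v x" for x
  proof -
    have "A *v x = A *v (\<Sum>j<CARD('n). (r j \<bullet> x) *\<^sub>R r j)"
      using orthonormal_fam_expand[OF on, of x] by simp
    also have "\<dots> = (\<Sum>j<CARD('n). (r j \<bullet> x) *\<^sub>R (A *v r j))"
      by (simp add: linear_sum[OF matrix_vector_mul_linear] matrix_vector_mult_scaleR)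
    also have "\<dots> = (\<Sum>j<CARD('n). (r j \<bullet> x) *\<^sub>R (B *v r j))"
      using eq by simp
    also have "\<dots> = B *v (\<Sum>j<CARD('n). (r j \<bullet> x) *\<^sub>R r j)"
      by (simp add: linear_sum[OF matrix_vector_mul_linear] matrix_vector_mult_scaleR)
    also have "\<dots> = B *v x"
      using orthonormal_fam_expand[OF on, of x] by simp
    finally show ?thesis .
  qed
  then show ?thesis by (simp add: matrix_eq)
qed

lemma mat_sqrt_props:
  fixes \<Omega> :: "real^'n^'n"
  assumes pd: "pos_def_mat \<Omega>"
  shows "psd_mat (mat_sqrt \<Omega>)" "mat_sqrt \<Omega> ** mat_sqrt \<Omega> = \<Omega>"
proof -
  let ?n = "CARD('n)"
  have symO: "sym_mat \<Omega>" using pd unfolding pos_def_mat_def by simp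
  obtain v \<omega> where on: "orthonormal_fam v ?n" and eig: "\<And>i. i < ?n \<Longrightarrow> \<Omega> *v v i = \<omega> i *\<^sub>R v i"
    and "\<And>i j. i \<le> j \<Longrightarrow> j < ?n \<Longrightarrow> \<omega> j \<le> \<omega> i"
    by (rule spectral[OF symO]) metis
  have wpos: "\<omega> i > 0" if "i < ?n" for i
  proof -
    have "v i \<noteq> 0" using on that unfolding orthonormal_fam_def by auto
    then have "v i \<bullet> (\<Omega> *v v i) > 0" using pd unfolding pos_def_mat_def by blast
    moreover have "v i \<bullet> v i = 1" using on that unfolding orthonormal_fam_def by (simp add: norm_eq_1)
    ultimately show ?thesis using eig[OF that] by simp
  qed
  define R0 :: "real^'n^'n" where "R0 = (\<chi> r s. \<Sum>i<?n. sqrt (\<omega> i) * v i $ r * v i $ s)"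
  have R0app: "R0 *v x = (\<Sum>i<?n. (sqrt (\<omega> i) * (v i \<bullet> x)) *\<^sub>R v i)" for x
    unfolding R0_def by (rule sum_outer_apply)
  have symR0: "sym_mat R0" unfolding sym_mat_def R0_def transpose_def
    by (simp add: vec_eq_iff mult_ac)
  have psdR0: "psd_mat R0"
    unfolding psd_mat_def
  proof (intro conjI allI symR0)
    fix x
    have "x \<bullet> (R0 *v x) = (\<Sum>i<?n. sqrt (\<omega> i) * (v i \<bullet> x)^2)"
      unfolding R0app by (simp add: inner_sum_right power2_eq_square inner_commute mult_ac)
    also have "\<dots> \<ge> 0" using wpos by (intro sum_nonneg) (simp add: less_imp_le)
    finally show "x \<bullet> (R0 *v x) \<ge> 0" .
  qed
  have sqR0: "R0 ** R0 = \<Omega>"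
  proof -
    have "(R0 ** R0) *v x = \<Omega> *v x" for x
    proof -
      have "(R0 ** R0) *v x = R0 *v (R0 *v x)" by (simp add: matrix_vector_mul_assoc)
      also have "\<dots> = (\<Sum>i<?n. (sqrt (\<omega> i) * (sqrt (\<omega> i) * (v i \<bullet> x))) *\<^sub>R v i)"
        unfolding R0app[of "R0 *v x"] unfolding R0app
        by (intro sum.cong refl) (simp add: onf_coeff[OF on])
      also have "\<dots> = (\<Sum>i<?n. (\<omega> i * (v i \<bullet> x)) *\<^sub>R v i)"
        by (intro sum.cong refl) (simp add: wpos less_imp_le mult.assoc[symmetric])
      also have "\<dots> = \<Omega> *v x" using spectral_apply[OF on eig] by simp
      finally show ?thesis .
    qed
    then show ?thesis by (simp add: matrix_eq)
  qed
  have uniq: "R = R0" if psdR: "psd_mat R" and sqR: "R ** R = \<Omega>" for R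
  proof -
    have symR: "sym_mat R" using psdR unfolding psd_mat_def by simp
    obtain r \<rho> where onr: "orthonormal_fam r ?n" and eigr: "\<And>i. i < ?n \<Longrightarrow> R *v r i = \<rho> i *\<^sub>R r i"
      and "\<And>i j. i \<le> j \<Longrightarrow> j < ?n \<Longrightarrow> \<rho> j \<le> \<rho> i"
      by (rule spectral[OF symR]) metis
    have rpos: "\<rho> j \<ge> 0" if "j < ?n" for j
    proof -
      have "r j \<bullet> (R *v r j) \<ge> 0" using psdR unfolding psd_mat_def by blast
      moreover have "r j \<bullet> r j = 1" using onr that unfolding orthonormal_fam_def by (simp add: norm_eq_1)
      ultimately show ?thesis using eigr[OF that] by simp
    qed
    show ?thesis
    proof (rule expand_in_basis_eq[OF onr])
      fix j assume j: "j < ?n"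
      have Orj: "\<Omega> *v r j = (\<rho> j)^2 *\<^sub>R r j"
        using eigr[OF j] sqR[symmetric] by (simp add: matrix_vector_mul_assoc[symmetric]
            matrix_vector_mult_scaleR power2_eq_square)
      have key: "sqrt (\<omega> i) * (v i \<bullet> r j) = \<rho> j * (v i \<bullet> r j)" if i: "i < ?n" for i
      proof (cases "v i \<bullet> r j = 0")
        case False
        have "v i \<bullet> (\<Omega> *v r j) = (\<rho> j)^2 * (v i \<bullet> r j)" using Orj by simp
        moreover have "v i \<bullet> (\<Omega> *v r j) = \<omega> i * (v i \<bullet> r j)"
          using sym_mat_inner[OF symO, of "v i" "r j", symmetric] eig[OF i] by simp
        ultimately have "\<omega> i = (\<rho> j)^2" using False by simp
        then have "sqrt (\<omega> i) = \<rho> j" using rpos[OF j] by simp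
        then show ?thesis by simp
      qed simp
      have "R0 *v r j = (\<Sum>i<?n. (\<rho> j * (v i \<bullet> r j)) *\<^sub>R v i)"
        unfolding R0app using key by (intro sum.cong refl) simp
      also have "\<dots> = \<rho> j *\<^sub>R (\<Sum>i<?n. (v i \<bullet> r j) *\<^sub>R v i)"
        by (simp add: scaleR_sum_right)
      also have "\<dots> = \<rho> j *\<^sub>R r j" unfolding sym[OF orthonormal_fam_expand[OF on, of "r j"]] ..
      finally show "R *v r j = R0 *v r j" using eigr[OF j] by simp
    qed
  qed
  have "mat_sqrt \<Omega> = R0"
    unfolding mat_sqrt_def
  proof (rule the_equality)
    show "psd_mat R0 \<and> R0 ** R0 = \<Omega>" using psdR0 sqR0 by simp
  next
    fix R assume "psd_mat R \<and> R ** R = \<Omega>"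
    then show "R = R0" using uniq by blast
  qed
  then show "psd_mat (mat_sqrt \<Omega>)" "mat_sqrt \<Omega> ** mat_sqrt \<Omega> = \<Omega>"
    using psdR0 sqR0 by auto
qed

definition orthonormal_set :: "(real^'n) set \<Rightarrow> bool" where
  "orthonormal_set B \<longleftrightarrow> pairwise orthogonal B \<and> (\<forall>b\<in>B. norm b = 1)"

lemma ons_finite_card:
  fixes B :: "(real^'n) set"
  assumes "orthonormal_set B" shows "finite B" "card B \<le> CARD('n)"
proof -
  have "0 \<notin> B" using assms unfolding orthonormal_set_def by auto
  then have "independent B" using assms unfolding orthonormal_set_def
    by (intro pairwise_orthogonal_independent) auto
  then show "finite B" "card B \<le> CARD('n)" using independent_bound[of B] by auto
qed

lemma ons_inner:
  assumes "orthonormal_set B" "b \<in> B" "b' \<in> B"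
  shows "b \<bullet> b' = (if b = b' then 1 else 0)"
  using assms unfolding orthonormal_set_def pairwise_def orthogonal_def
  by (auto simp: norm_eq_1)

lemma ons_coeff:
  fixes B :: "(real^'n) set"
  assumes on: "orthonormal_set B" and b0: "b0 \<in> B"
  shows "b0 \<bullet> (\<Sum>b\<in>B. c b *\<^sub>R b) = c b0"
proof -
  have fin: "finite B" using ons_finite_card[OF on] by simp
  have "b0 \<bullet> (\<Sum>b\<in>B. c b *\<^sub>R b) = (\<Sum>b\<in>B. c b * (b0 \<bullet> b))"
    by (simp add: inner_sum_right)
  also have "\<dots> = (\<Sum>b\<in>{b0}. c b * (b0 \<bullet> b))"
    using on b0 fin by (intro sum.mono_neutral_right) (auto simp: ons_inner)
  also have "\<dots> = c b0" using on b0 by (simp add: ons_inner)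
  finally show ?thesis .
qed

lemma ons_bessel:
  fixes B :: "(real^'n) set"
  assumes on: "orthonormal_set B"
  shows "(\<Sum>b\<in>B. (x \<bullet> b)^2) \<le> x \<bullet> x"
proof -
  define s where "s = (\<Sum>b\<in>B. (x \<bullet> b) *\<^sub>R b)"
  have sy: "s \<bullet> y = (\<Sum>b\<in>B. (x \<bullet> b) * (b \<bullet> y))" for y
    unfolding s_def by (simp add: inner_sum_left)
  have bs: "b \<bullet> s = x \<bullet> b" if "b \<in> B" for b
    unfolding s_def by (rule ons_coeff[OF on that])
  have xs: "s \<bullet> x = (\<Sum>b\<in>B. (x \<bullet> b)^2)"
    unfolding sy by (simp add: power2_eq_square inner_commute)
  have ss: "s \<bullet> s = (\<Sum>b\<in>B. (x \<bullet> b)^2)"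
    unfolding sy by (intro sum.cong refl) (simp add: bs power2_eq_square)
  have "0 \<le> (x - s) \<bullet> (x - s)" by simp
  also have "\<dots> = x \<bullet> x - 2 * (s \<bullet> x) + s \<bullet> s"
    by (simp add: inner_diff_left inner_diff_right inner_commute[of x s])
  finally show ?thesis using xs ss by simp
qed

lemma ons_parseval:
  fixes B :: "(real^'n) set"
  assumes on: "orthonormal_set B" and sp: "span B = UNIV"
  shows "x \<bullet> x = (\<Sum>b\<in>B. (x \<bullet> b)^2)"
proof -
  define s where "s = (\<Sum>b\<in>B. (x \<bullet> b) *\<^sub>R b)"
  have "orthogonal (x - s) b" if "b \<in> B" for b
  proof -
    have "b \<bullet> s = x \<bullet> b" unfolding s_def by (rule ons_coeff[OF on that])
    then have "s \<bullet> b = x \<bullet> b" by (simp add: inner_commute)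
    then show ?thesis unfolding orthogonal_def by (simp add: inner_diff_left)
  qed
  then have orth: "\<And>b. b \<in> B \<Longrightarrow> orthogonal (x - s) b" by blast
  have "x - s \<in> span B" using sp by simp
  then have "orthogonal (x - s) (x - s)"
    by (rule orthogonal_to_span) (rule orth)
  then have "x = s" by (simp add: orthogonal_def)
  then have "x \<bullet> x = x \<bullet> s" by simp
  also have "\<dots> = (\<Sum>b\<in>B. (x \<bullet> b)^2)"
    unfolding s_def by (simp add: inner_sum_right power2_eq_square)
  finally show ?thesis .
qed

lemma ky_fan:
  fixes M :: "real^'n^'n"
  assumes on: "orthonormal_fam v CARD('n)" and eig: "\<And>i. i < CARD('n) \<Longrightarrow> M *v v i = \<mu> i *\<^sub>R v i"
    and dec: "\<And>i j. i \<le> j \<Longrightarrow> j < CARD('n) \<Longrightarrow> \<mu> j \<le> \<mu> i"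
    and B: "orthonormal_set B"
  shows "(\<Sum>b\<in>B. b \<bullet> (M *v b)) \<le> (\<Sum>i<card B. \<mu> i)"
proof -
  let ?n = "CARD('n)"
  let ?p = "card B"
  have fin: "finite B" and pn: "?p \<le> ?n" using ons_finite_card[OF B] by auto
  define w where "w i = (\<Sum>b\<in>B. (v i \<bullet> b)^2)" for i
  have w1: "w i \<le> 1" if "i < ?n" for i
  proof -
    have "w i \<le> v i \<bullet> v i" unfolding w_def by (rule ons_bessel[OF B])
    also have "\<dots> = 1" using on that unfolding orthonormal_fam_def by (simp add: norm_eq_1)
    finally show ?thesis .
  qed
  have w0: "w i \<ge> 0" for i unfolding w_def by (intro sum_nonneg) simp
  have wsum: "(\<Sum>i<?n. w i) = ?p"
  proof -
    have "(\<Sum>i<?n. w i) = (\<Sum>b\<in>B. \<Sum>i<?n. (v i \<bullet> b)^2)"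
      unfolding w_def by (rule sum.swap)
    also have "\<dots> = (\<Sum>b\<in>B. b \<bullet> b)"
      by (intro sum.cong refl) (simp add: orthonormal_fam_parseval[OF on])
    also have "\<dots> = (\<Sum>b\<in>B. 1)"
      using B unfolding orthonormal_set_def by (intro sum.cong refl) (simp add: norm_eq_1)
    finally show ?thesis by simp
  qed
  have lhs: "(\<Sum>b\<in>B. b \<bullet> (M *v b)) = (\<Sum>i<?n. \<mu> i * w i)"
  proof -
    have "(\<Sum>b\<in>B. b \<bullet> (M *v b)) = (\<Sum>b\<in>B. \<Sum>i<?n. \<mu> i * (v i \<bullet> b)^2)"
      by (intro sum.cong refl) (rule spectral_quad[OF on eig])
    also have "\<dots> = (\<Sum>i<?n. \<Sum>b\<in>B. \<mu> i * (v i \<bullet> b)^2)" by (rule sum.swap)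
    also have "\<dots> = (\<Sum>i<?n. \<mu> i * w i)" unfolding w_def by (simp add: sum_distrib_left)
    finally show ?thesis .
  qed
  show ?thesis
  proof (cases "?p = 0")
    case True
    then have "B = {}" using fin by simp
    then show ?thesis by simp
  next
    case False
    define t where "t = \<mu> (?p - 1)"
    have "(\<Sum>i<?n. \<mu> i * w i) \<le> (\<Sum>i<?n. t * w i + (if i < ?p then \<mu> i - t else 0))"
    proof (intro sum_mono)
      fix i assume i: "i \<in> {..<?n}"
      show "\<mu> i * w i \<le> t * w i + (if i < ?p then \<mu> i - t else 0)"
      proof (cases "i < ?p")
        case True
        then have "\<mu> i \<ge> t" unfolding t_def using dec pn False by simp
        moreover have "w i \<le> 1" using w1 i by simp
        ultimately have "(\<mu> i - t) * (w i - 1) \<le> 0" by (simp add: mult_nonneg_nonpos)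
        then show ?thesis using True by (simp add: algebra_simps)
      next
        case ge: False
        then have "\<mu> i \<le> t" unfolding t_def using dec i False by simp
        then show ?thesis using ge w0[of i] by (simp add: mult_right_mono)
      qed
    qed
    also have "\<dots> = t * (\<Sum>i<?n. w i) + (\<Sum>i<?n. if i < ?p then \<mu> i - t else 0)"
      by (simp add: sum.distrib sum_distrib_left)
    also have "(\<Sum>i<?n. if i < ?p then \<mu> i - t else 0) = (\<Sum>i<?p. \<mu> i - t)"
    proof -
      have "(\<Sum>i<?n. if i < ?p then \<mu> i - t else 0) = (\<Sum>i\<in>{..<?p}. if i < ?p then \<mu> i - t else 0)"
        using pn by (intro sum.mono_neutral_right) auto
      then show ?thesis by simp
    qed
    also have "t * (\<Sum>i<?n. w i) + (\<Sum>i<?p. \<mu> i - t) = (\<Sum>i<?p. \<mu> i)"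
      unfolding wsum by (simp add: sum_subtractf)
    finally show ?thesis using lhs by simp
  qed
qed

lemma rayleigh_min:
  fixes M :: "real^'n^'n"
  assumes on: "orthonormal_fam v CARD('n)" and eig: "\<And>i. i < CARD('n) \<Longrightarrow> M *v v i = \<mu> i *\<^sub>R v i"
    and dec: "\<And>i j. i \<le> j \<Longrightarrow> j < CARD('n) \<Longrightarrow> \<mu> j \<le> \<mu> i"
  shows "\<mu> (CARD('n) - 1) * (x \<bullet> x) \<le> x \<bullet> (M *v x)"
proof -
  have "\<mu> (CARD('n) - 1) * (x \<bullet> x) = (\<Sum>i<CARD('n). \<mu> (CARD('n) - 1) * (v i \<bullet> x)^2)"
    by (simp add: orthonormal_fam_parseval[OF on] sum_distrib_left)
  also have "\<dots> \<le> (\<Sum>i<CARD('n). \<mu> i * (v i \<bullet> x)^2)"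
    by (intro sum_mono mult_right_mono) (auto intro: dec)
  also have "\<dots> = x \<bullet> (M *v x)" by (simp add: spectral_quad[OF on eig])
  finally show ?thesis .
qed

lemma trace_ons:
  fixes M :: "real^'n^'n"
  assumes on: "orthonormal_fam v CARD('n)" and eig: "\<And>i. i < CARD('n) \<Longrightarrow> M *v v i = \<mu> i *\<^sub>R v i"
    and B: "orthonormal_set B" and sp: "span B = UNIV"
  shows "(\<Sum>b\<in>B. b \<bullet> (M *v b)) = (\<Sum>i<CARD('n). \<mu> i)"
proof -
  have "(\<Sum>b\<in>B. b \<bullet> (M *v b)) = (\<Sum>b\<in>B. \<Sum>i<CARD('n). \<mu> i * (v i \<bullet> b)^2)"
    by (intro sum.cong refl) (rule spectral_quad[OF on eig])
  also have "\<dots> = (\<Sum>i<CARD('n). \<mu> i * (\<Sum>b\<in>B. (v i \<bullet> b)^2))"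
    by (subst sum.swap) (simp add: sum_distrib_left)
  also have "\<dots> = (\<Sum>i<CARD('n). \<mu> i * (v i \<bullet> v i))"
    by (simp add: ons_parseval[OF B sp])
  also have "\<dots> = (\<Sum>i<CARD('n). \<mu> i)"
    using on unfolding orthonormal_fam_def by (intro sum.cong refl) (simp add: norm_eq_1)
  finally show ?thesis .
qed

lemma sum_top_bound:
  fixes \<mu> :: "nat \<Rightarrow> real" and r :: nat
  assumes "p \<le> r + k" "p \<le> N" "k < N"
    and nn: "\<And>i. i < N \<Longrightarrow> \<mu> i \<ge> 0"
    and dec: "\<And>i j. i \<le> j \<Longrightarrow> j < N \<Longrightarrow> \<mu> j \<le> \<mu> i"
  shows "(\<Sum>i<p. \<mu> i) \<le> (\<Sum>i<k. \<mu> i) + real r * \<mu> k"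
proof -
  have split: "{..<p} = ({..<p} \<inter> {..<k}) \<union> ({..<p} - {..<k})" by auto
  have "(\<Sum>i<p. \<mu> i) = (\<Sum>i\<in>{..<p} \<inter> {..<k}. \<mu> i) + (\<Sum>i\<in>{..<p} - {..<k}. \<mu> i)"
    by (subst split) (rule sum.union_disjoint, auto)
  also have "(\<Sum>i\<in>{..<p} \<inter> {..<k}. \<mu> i) \<le> (\<Sum>i<k. \<mu> i)"
    using assms by (intro sum_mono2) auto
  also have "(\<Sum>i\<in>{..<p} - {..<k}. \<mu> i) \<le> of_nat (card ({..<p} - {..<k})) * \<mu> k"
    using assms by (intro sum_bounded_above) auto
  also have "\<dots> \<le> real r * \<mu> k"
  proof -
    have "card ({..<p} - {..<k}) \<le> r" using assms(1) by (cases "k \<le> p") (auto simp: card_Diff_subset)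
    moreover have "\<mu> k \<ge> 0" using nn assms by simp
    ultimately show ?thesis by (simp add: mult_right_mono)
  qed
  finally show ?thesis by simp
qed

lemma quad_R:
  assumes symR: "sym_mat R" and sq: "R ** R = \<Omega>"
  shows "quad \<Omega> y = (R *v y) \<bullet> (R *v y)"
proof -
  have "quad \<Omega> y = y \<bullet> (R *v (R *v y))"
    unfolding quad_def sq[symmetric] by (simp add: matrix_vector_mul_assoc)
  also have "\<dots> = (R *v y) \<bullet> (R *v y)" by (rule sym_mat_inner[OF symR, symmetric])
  finally show ?thesis .
qed

lemma R_inj:
  assumes pd: "pos_def_mat \<Omega>" and symR: "sym_mat R" and sq: "R ** R = \<Omega>"
  shows "inj ((*v) R)"
proof (rule injI)
  fix x y assume "R *v x = R *v y"
  then have "R *v (x - y) = 0" by (simp add: matrix_vector_mult_diff_distrib)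
  then have "quad \<Omega> (x - y) = 0" using quad_R[OF symR sq] by simp
  then show "x = y" using pd unfolding pos_def_mat_def quad_def
    by (metis less_irrefl right_minus_eq)
qed

lemma quad_form_zero2:
  fixes c d :: real
  assumes all: "\<And>t. 0 \<le> 2*t*c + t^2*d"
  shows "c = 0"
proof -
  define a where "a = \<bar>d\<bar> + 1"
  have a: "a > 0" unfolding a_def by simp
  have "0 \<le> 2*(-c/a)*c + (-c/a)^2*d" by (rule all)
  then have "0 \<le> (2*(-c/a)*c + (-c/a)^2*d) * a^2" using a by simp
  moreover have "(2*(-c/a)*c + (-c/a)^2*d) * a^2 = c^2 * (d - 2*a)" using a
    by (simp add: field_simps power2_eq_square)
  ultimately have "0 \<le> c^2 * (d - 2*a)" by simp
  moreover have "d - 2*a < 0" unfolding a_def by (cases "d \<ge> 0") auto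
  ultimately have "c^2 \<le> 0" by (simp add: zero_le_mult_iff)
  then show ?thesis by simp
qed

lemma inner_expand:
  fixes a d :: "'a::real_inner"
  shows "(a + t *\<^sub>R d) \<bullet> (a + t *\<^sub>R d) = a \<bullet> a + 2*t*(a \<bullet> d) + t^2*(d \<bullet> d)"
  by (simp add: inner_add_left inner_add_right inner_commute[of d a] power2_eq_square algebra_simps)

lemma feasible_closed: "closed (feasible_set k E es m A a)"
proof -
  have "feasible_set k E es m A a = (\<Inter>i\<in>{..<k}. {f. E i \<bullet> f = es i}) \<inter> (\<Inter>j\<in>{..<m}. {f. A j \<bullet> f = a j})"
    unfolding feasible_set_def by auto
  then show ?thesis by (simp add: closed_INT closed_hyperplane closed_Int)
qed

lemma feasible_affine:
  assumes "f \<in> feasible_set k E es m A a" "g \<in> feasible_set k E es m A a"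
  shows "f + t *\<^sub>R (g - f) \<in> feasible_set k E es m A a"
  using assms unfolding feasible_set_def by (simp add: inner_add_right inner_diff_right)

lemma agent_char:
  fixes R \<Omega> :: "real^'n^'n"
  assumes symR: "sym_mat R" and sq: "R ** R = \<Omega>" and inj: "inj ((*v) R)"
    and F: "F = feasible_set k E es m A a" and ne: "F \<noteq> {}"
  shows "agent_choice \<Omega> u F \<in> F"
    "\<And>g. g \<in> F \<Longrightarrow> (R *v (agent_choice \<Omega> u F - u)) \<bullet> (R *v (g - agent_choice \<Omega> u F)) = 0"
    "\<And>f0. f0 \<in> F \<Longrightarrow> (\<And>g. g \<in> F \<Longrightarrow> (R *v (f0 - u)) \<bullet> (R *v (g - f0)) = 0) \<Longrightarrow> agent_choice \<Omega> u F = f0"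
proof -
  have qR: "quad \<Omega> y = (R *v y) \<bullet> (R *v y)" for y by (rule quad_R[OF symR sq])
  define S where "S = (*v) R ` F"
  have cS: "closed S" unfolding S_def F
    by (rule closed_injective_linear_image[OF feasible_closed _ inj]) simp
  have neS: "S \<noteq> {}" using ne unfolding S_def by simp
  obtain f0 where f0F: "f0 \<in> F" and f0c: "R *v f0 = closest_point S (R *v u)"
    using closest_point_in_set[OF cS neS, of "R *v u"] unfolding S_def by auto
  have "dist (R *v u) (R *v f0) \<le> dist (R *v u) (R *v g)" if "g \<in> F" for g
    using closest_point_le[OF cS, of "R *v g" "R *v u"] that f0c unfolding S_def by auto
  then have min: "quad \<Omega> (f0 - u) \<le> quad \<Omega> (g - u)" if "g \<in> F" for g
    using that unfolding qR dist_norm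
    by (metis matrix_vector_mult_diff_distrib norm_minus_commute norm_le dist_norm)
  have orth: "(R *v (f0 - u)) \<bullet> (R *v (g - f0)) = 0" if g: "g \<in> F" for g
  proof -
    let ?a = "R *v (f0 - u)" and ?d = "R *v (g - f0)"
    have "0 \<le> 2*t*(?a \<bullet> ?d) + t^2*(?d \<bullet> ?d)" for t
    proof -
      have "f0 + t *\<^sub>R (g - f0) \<in> F" using feasible_affine f0F g F by blast
      then have "quad \<Omega> (f0 - u) \<le> quad \<Omega> (f0 + t *\<^sub>R (g - f0) - u)" by (rule min)
      moreover have "R *v (f0 + t *\<^sub>R (g - f0) - u) = ?a + t *\<^sub>R ?d"
        by (simp add: matrix_vector_right_distrib matrix_vector_mult_diff_distrib matrix_vector_mult_scaleR algebra_simps)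
      ultimately have "?a \<bullet> ?a \<le> (?a + t *\<^sub>R ?d) \<bullet> (?a + t *\<^sub>R ?d)" unfolding qR by simp
      then show ?thesis unfolding inner_expand by simp
    qed
    then show ?thesis by (rule quad_form_zero2)
  qed
  have uniq: "f1 = f0" if f1F: "f1 \<in> F" and o1: "\<And>g. g \<in> F \<Longrightarrow> (R *v (f1 - u)) \<bullet> (R *v (g - f1)) = 0" for f1
  proof -
    let ?a = "R *v (f0 - u)" and ?d = "R *v (f1 - f0)"
    have "?a \<bullet> ?d = 0" using orth f1F by simp
    moreover have "(R *v (f1 - u)) \<bullet> (R *v (f0 - f1)) = 0" using o1 f0F by simp
    moreover have "R *v (f1 - u) = ?a + ?d" "R *v (f0 - f1) = - ?d"
      by (simp_all add: matrix_vector_mult_diff_distrib algebra_simps)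
    ultimately have e1: "?a \<bullet> ?d = 0" and e2: "(?a + ?d) \<bullet> ?d = 0" by simp_all
    have "?d \<bullet> ?d = (?a + ?d) \<bullet> ?d - ?a \<bullet> ?d" by (simp add: inner_add_left)
    then have "?d \<bullet> ?d = 0" using e1 e2 by simp
    then have "R *v f1 = R *v f0" by (simp add: matrix_vector_mult_diff_distrib)
    then show ?thesis using inj by (simp add: inj_eq)
  qed
  have ac: "agent_choice \<Omega> u F = f0"
    unfolding agent_choice_def
  proof (rule the_equality)
    show "f0 \<in> F \<and> (\<forall>g\<in>F. - quad \<Omega> (g - u) \<le> - quad \<Omega> (f0 - u))" using f0F min by simp
  next
    fix f1 assume h: "f1 \<in> F \<and> (\<forall>g\<in>F. - quad \<Omega> (g - u) \<le> - quad \<Omega> (f1 - u))"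
    then have "quad \<Omega> (f1 - u) \<le> quad \<Omega> (f0 - u)" using f0F by auto
    moreover have "quad \<Omega> (f1 - u) = quad \<Omega> (f0 - u) + (R *v (f1 - f0)) \<bullet> (R *v (f1 - f0))"
    proof -
      have "R *v (f1 - u) = R *v (f0 - u) + R *v (f1 - f0)"
        by (simp add: matrix_vector_mult_diff_distrib algebra_simps)
      then show ?thesis unfolding qR using orth[of f1] h
        by (simp add: inner_add_left inner_add_right inner_commute)
    qed
    ultimately have "(R *v (f1 - f0)) \<bullet> (R *v (f1 - f0)) \<le> 0" by simp
    then have "(R *v (f1 - f0)) \<bullet> (R *v (f1 - f0)) = 0" using inner_ge_zero[of "R *v (f1 - f0)"] by linarith
    then have "R *v (f1 - f0) = 0" by (simp only: inner_eq_zero_iff)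
    then have "R *v f1 = R *v f0" by (simp add: matrix_vector_mult_diff_distrib)
    then show "f1 = f0" using inj by (simp add: inj_eq)
  qed
  show "agent_choice \<Omega> u F \<in> F" using ac f0F by simp
  show "\<And>g. g \<in> F \<Longrightarrow> (R *v (agent_choice \<Omega> u F - u)) \<bullet> (R *v (g - agent_choice \<Omega> u F)) = 0"
    using ac orth by simp
  show "\<And>f1. f1 \<in> F \<Longrightarrow> (\<And>g. g \<in> F \<Longrightarrow> (R *v (f1 - u)) \<bullet> (R *v (g - f1)) = 0) \<Longrightarrow> agent_choice \<Omega> u F = f1"
    using ac uniq by metis
qed

definition sqint :: "'w measure \<Rightarrow> ('w \<Rightarrow> real^'n) \<Rightarrow> bool" where
  "sqint M f \<longleftrightarrow> f \<in> borel_measurable M \<and> integrable M (\<lambda>\<omega>. (norm (f \<omega>))^2)"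

lemma sqint_diff:
  assumes "sqint M f" "sqint M g"
  shows "sqint M (\<lambda>\<omega>. f \<omega> - g \<omega>)"
  unfolding sqint_def
proof
  show meas: "(\<lambda>\<omega>. f \<omega> - g \<omega>) \<in> borel_measurable M" using assms unfolding sqint_def
    by (intro borel_measurable_diff) auto
  have int: "integrable M (\<lambda>\<omega>. 2 * (norm (f \<omega>))^2 + 2 * (norm (g \<omega>))^2)"
    using assms unfolding sqint_def by simp
  show "integrable M (\<lambda>\<omega>. (norm (f \<omega> - g \<omega>))^2)"
  proof (rule Bochner_Integration.integrable_bound[OF int])
    show "(\<lambda>\<omega>. (norm (f \<omega> - g \<omega>))^2) \<in> borel_measurable M" using meas by measurable
    show "AE \<omega> in M. norm ((norm (f \<omega> - g \<omega>))^2) \<le> norm (2 * (norm (f \<omega>))^2 + 2 * (norm (g \<omega>))^2)"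
    proof (rule AE_I2)
      fix \<omega>
      have "norm (f \<omega> - g \<omega>) \<le> norm (f \<omega>) + norm (g \<omega>)" by (rule norm_triangle_ineq4)
      then have "(norm (f \<omega> - g \<omega>))^2 \<le> (norm (f \<omega>) + norm (g \<omega>))^2"
        by (simp add: power_mono)
      also have "\<dots> \<le> 2 * (norm (f \<omega>))^2 + 2 * (norm (g \<omega>))^2"
      proof -
        have "(norm (f \<omega>) + norm (g \<omega>))^2 + (norm (f \<omega>) - norm (g \<omega>))^2 = 2 * (norm (f \<omega>))^2 + 2 * (norm (g \<omega>))^2"
          by (simp add: power2_eq_square algebra_simps)
        moreover have "0 \<le> (norm (f \<omega>) - norm (g \<omega>))^2" by simp
        ultimately show ?thesis by linarith
      qed
      finally show "norm ((norm (f \<omega> - g \<omega>))^2) \<le> norm (2 * (norm (f \<omega>))^2 + 2 * (norm (g \<omega>))^2)"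
        by simp
    qed
  qed
qed

lemma sqint_mat:
  fixes A :: "real^'n^'n"
  assumes "sqint M f"
  shows "sqint M (\<lambda>\<omega>. A *v f \<omega>)"
  unfolding sqint_def
proof
  have cont: "(*v) A \<in> borel_measurable borel"
    by (intro borel_measurable_continuous_onI continuous_intros)
  show meas: "(\<lambda>\<omega>. A *v f \<omega>) \<in> borel_measurable M"
    using measurable_compose[OF _ cont, of f M] assms unfolding sqint_def by (simp add: o_def)
  obtain K where K: "\<And>x. norm (A *v x) \<le> norm x * K" and "K > 0"
    using bounded_linear.pos_bounded[OF matrix_vector_mul_bounded_linear[of A]] by blast
  have int: "integrable M (\<lambda>\<omega>. K^2 * (norm (f \<omega>))^2)"
    using assms unfolding sqint_def by simp
  show "integrable M (\<lambda>\<omega>. (norm (A *v f \<omega>))^2)"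
  proof (rule Bochner_Integration.integrable_bound[OF int])
    show "(\<lambda>\<omega>. (norm (A *v f \<omega>))^2) \<in> borel_measurable M" using meas by measurable
    show "AE \<omega> in M. norm ((norm (A *v f \<omega>))^2) \<le> norm (K^2 * (norm (f \<omega>))^2)"
    proof (rule AE_I2)
      fix \<omega>
      have "(norm (A *v f \<omega>))^2 \<le> (norm (f \<omega>) * K)^2" using K[of "f \<omega>"] by (simp add: power_mono)
      then show "norm ((norm (A *v f \<omega>))^2) \<le> norm (K^2 * (norm (f \<omega>))^2)"
        by (simp add: power_mult_distrib mult.commute)
    qed
  qed
qed

lemma sqint_const:
  assumes "prob_space M" shows "sqint M (\<lambda>_. c)"
proof -
  interpret prob_space M by fact
  show ?thesis unfolding sqint_def by simp
qed

lemma sqint_integrable: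
  assumes P: "prob_space M" and f: "sqint M f"
  shows "integrable M f"
proof -
  interpret prob_space M by fact
  have int: "integrable M (\<lambda>\<omega>. 1 + (norm (f \<omega>))^2)" using f unfolding sqint_def by simp
  show ?thesis
  proof (rule Bochner_Integration.integrable_bound[OF int])
    show "f \<in> borel_measurable M" using f unfolding sqint_def by simp
    show "AE \<omega> in M. norm (f \<omega>) \<le> norm (1 + (norm (f \<omega>))^2)"
    proof (rule AE_I2)
      fix \<omega>
      have "0 \<le> (norm (f \<omega>) - 1)^2" by simp
      then have "2 * norm (f \<omega>) \<le> 1 + (norm (f \<omega>))^2"
        by (simp add: power2_eq_square algebra_simps)
      then have "norm (f \<omega>) \<le> 1 + (norm (f \<omega>))^2"
        using norm_ge_zero[of "f \<omega>"] by linarith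
      then show "norm (f \<omega>) \<le> norm (1 + (norm (f \<omega>))^2)" by simp
    qed
  qed
qed

lemma sqint_inner_sq:
  assumes f: "sqint M f"
  shows "integrable M (\<lambda>\<omega>. (b \<bullet> f \<omega>)^2)"
proof -
  have int: "integrable M (\<lambda>\<omega>. (norm b)^2 * (norm (f \<omega>))^2)" using f unfolding sqint_def by simp
  show ?thesis
  proof (rule Bochner_Integration.integrable_bound[OF int])
    have fm: "f \<in> borel_measurable M" using f unfolding sqint_def by simp
    show "(\<lambda>\<omega>. (b \<bullet> f \<omega>)^2) \<in> borel_measurable M"
      by (intro borel_measurable_power borel_measurable_inner borel_measurable_const fm)
    show "AE \<omega> in M. norm ((b \<bullet> f \<omega>)^2) \<le> norm ((norm b)^2 * (norm (f \<omega>))^2)"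
    proof (rule AE_I2)
      fix \<omega>
      have "\<bar>b \<bullet> f \<omega>\<bar> \<le> norm b * norm (f \<omega>)" by (rule Cauchy_Schwarz_ineq2)
      then have "(b \<bullet> f \<omega>)^2 \<le> (norm b * norm (f \<omega>))^2"
        by (metis abs_ge_zero power2_abs power_mono)
      then show "norm ((b \<bullet> f \<omega>)^2) \<le> norm ((norm b)^2 * (norm (f \<omega>))^2)"
        by (simp add: power_mult_distrib)
    qed
  qed
qed

lemma outer_rows: "outer x y = (\<chi> i. x $ i *\<^sub>R y)"
  unfolding outer_def by (simp add: vec_eq_iff)

lemma outer_apply: "outer x y *v b = (y \<bullet> b) *\<^sub>R x"
  by (simp add: vec_eq_iff outer_def matrix_vector_mult_def inner_vec_def sum_distrib_left mult_ac)

lemma norm_outer_le: "norm (outer x (x::real^'n)) \<le> CARD('n) * (norm x)^2"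
proof -
  have "norm (outer x x) = L2_set (\<lambda>i. norm (x $ i *\<^sub>R x)) UNIV"
    unfolding outer_rows norm_vec_def by simp
  also have "\<dots> \<le> (\<Sum>i\<in>UNIV. norm (x $ i *\<^sub>R x))" by (rule L2_set_le_sum) simp
  also have "\<dots> \<le> (\<Sum>i\<in>(UNIV::'n set). (norm x)^2)"
  proof (intro sum_mono)
    fix i
    have "\<bar>x $ i\<bar> * norm x \<le> norm x * norm x"
      by (intro mult_right_mono component_le_norm_cart) simp
    then show "norm (x $ i *\<^sub>R x) \<le> (norm x)^2" by (simp add: power2_eq_square)
  qed
  also have "\<dots> = CARD('n) * (norm x)^2" by simp
  finally show ?thesis .
qed

lemma outer_measurable:
  assumes "f \<in> borel_measurable M"
  shows "(\<lambda>\<omega>. outer (f \<omega>) ((f \<omega>)::real^'n)) \<in> borel_measurable M"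
proof -
  have "(\<lambda>x::real^'n. outer x x) \<in> borel_measurable borel"
    unfolding outer_def by (intro borel_measurable_continuous_onI continuous_intros)
  from measurable_compose[OF assms this] show ?thesis by (simp add: o_def)
qed

lemma sqint_outer:
  fixes f :: "'w \<Rightarrow> real^'n"
  assumes f: "sqint M f"
  shows "integrable M (\<lambda>\<omega>. outer (f \<omega>) (f \<omega>))"
proof -
  have int: "integrable M (\<lambda>\<omega>. CARD('n) * (norm (f \<omega>))^2)" using f unfolding sqint_def by simp
  show ?thesis
  proof (rule Bochner_Integration.integrable_bound[OF int])
    show "(\<lambda>\<omega>. outer (f \<omega>) (f \<omega>)) \<in> borel_measurable M"
      using f unfolding sqint_def by (intro outer_measurable) simp
    show "AE \<omega> in M. norm (outer (f \<omega>) (f \<omega>)) \<le> norm (CARD('n) * (norm (f \<omega>))^2)"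
      using norm_outer_le by (intro AE_I2) (simp add: order_trans[OF norm_outer_le])
  qed
qed

lemma linear_quadform: "linear (\<lambda>X::real^'n^'n. b \<bullet> (X *v b))"
  by (rule linearI) (simp_all add: matrix_vector_mult_add_rdistrib inner_add_right
      scaleR_matrix_vector_assoc[symmetric])

lemma sqint_quad:
  fixes f :: "'w \<Rightarrow> real^'n"
  assumes f: "sqint M f"
  shows "b \<bullet> ((\<integral>\<omega>. outer (f \<omega>) (f \<omega>) \<partial>M) *v b) = (\<integral>\<omega>. (b \<bullet> f \<omega>)^2 \<partial>M)"
proof -
  have bl: "bounded_linear (\<lambda>X::real^'n^'n. b \<bullet> (X *v b))"
    using linear_quadform linear_conv_bounded_linear by blast
  have "(\<integral>\<omega>. b \<bullet> (outer (f \<omega>) (f \<omega>) *v b) \<partial>M) = b \<bullet> ((\<integral>\<omega>. outer (f \<omega>) (f \<omega>) \<partial>M) *v b)"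
    by (rule integral_bounded_linear[OF bl sqint_outer[OF f]])
  moreover have "b \<bullet> (outer (f \<omega>) (f \<omega>) *v b) = (b \<bullet> f \<omega>)^2" for \<omega>
    by (simp add: outer_apply power2_eq_square inner_commute)
  ultimately show ?thesis by simp
qed

lemma linear_transpose: "linear (transpose :: real^'n^'n \<Rightarrow> real^'n^'n)"
  by (rule linearI) (simp_all add: transpose_def vec_eq_iff)

lemma sqint_sym:
  fixes f :: "'w \<Rightarrow> real^'n"
  assumes f: "sqint M f"
  shows "sym_mat (\<integral>\<omega>. outer (f \<omega>) (f \<omega>) \<partial>M)"
proof -
  have bl: "bounded_linear (transpose :: real^'n^'n \<Rightarrow> real^'n^'n)"
    using linear_transpose linear_conv_bounded_linear by blast
  have "(\<integral>\<omega>. transpose (outer (f \<omega>) (f \<omega>)) \<partial>M) = transpose (\<integral>\<omega>. outer (f \<omega>) (f \<omega>) \<partial>M)"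
    by (rule integral_bounded_linear[OF bl sqint_outer[OF f]])
  moreover have "transpose (outer x x) = outer x x" for x :: "real^'n"
    by (simp add: transpose_def outer_def vec_eq_iff mult.commute)
  ultimately show ?thesis unfolding sym_mat_def by simp
qed

lemma variance_bound:
  fixes f :: "'w \<Rightarrow> real^'n"
  assumes P: "prob_space M" and f: "sqint M f"
  defines "m \<equiv> (\<integral>\<omega>. f \<omega> \<partial>M)"
  shows "integrable M (\<lambda>\<omega>. (c - b \<bullet> f \<omega>)^2)"
    "b \<bullet> ((\<integral>\<omega>. outer (f \<omega> - m) (f \<omega> - m) \<partial>M) *v b) \<le> (\<integral>\<omega>. (c - b \<bullet> f \<omega>)^2 \<partial>M)"
proof -
  interpret prob_space M by fact
  have fm: "sqint M (\<lambda>\<omega>. f \<omega> - m)" by (rule sqint_diff[OF f sqint_const[OF P]])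
  have fi: "integrable M f" by (rule sqint_integrable[OF P f])
  define h where "h \<omega> = b \<bullet> (f \<omega> - m)" for \<omega>
  have hi: "integrable M h" unfolding h_def using sqint_integrable[OF P fm] by simp
  have h0: "(\<integral>\<omega>. h \<omega> \<partial>M) = 0"
  proof -
    have "(\<integral>\<omega>. h \<omega> \<partial>M) = b \<bullet> (\<integral>\<omega>. f \<omega> - m \<partial>M)"
      unfolding h_def using sqint_integrable[OF P fm] by simp
    also have "(\<integral>\<omega>. f \<omega> - m \<partial>M) = m - m" using fi by (simp add: m_def prob_space)
    finally show ?thesis by simp
  qed
  have h2: "integrable M (\<lambda>\<omega>. (h \<omega>)^2)" unfolding h_def by (rule sqint_inner_sq[OF fm])
  have eq: "(c - b \<bullet> f \<omega>)^2 = (c - b \<bullet> m)^2 - 2 * (c - b \<bullet> m) * h \<omega> + (h \<omega>)^2" for \<omega>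
    unfolding h_def by (simp add: inner_diff_right power2_eq_square algebra_simps)
  show int: "integrable M (\<lambda>\<omega>. (c - b \<bullet> f \<omega>)^2)"
    unfolding eq using hi h2 by simp
  have "(\<integral>\<omega>. (c - b \<bullet> f \<omega>)^2 \<partial>M) = (c - b \<bullet> m)^2 - 2 * (c - b \<bullet> m) * (\<integral>\<omega>. h \<omega> \<partial>M) + (\<integral>\<omega>. (h \<omega>)^2 \<partial>M)"
    unfolding eq using hi h2 by (simp add: prob_space)
  also have "\<dots> \<ge> (\<integral>\<omega>. (h \<omega>)^2 \<partial>M)" using h0 by simp
  finally have "(\<integral>\<omega>. (h \<omega>)^2 \<partial>M) \<le> (\<integral>\<omega>. (c - b \<bullet> f \<omega>)^2 \<partial>M)" .
  moreover have "b \<bullet> ((\<integral>\<omega>. outer (f \<omega> - m) (f \<omega> - m) \<partial>M) *v b) = (\<integral>\<omega>. (h \<omega>)^2 \<partial>M)"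
    unfolding h_def by (rule sqint_quad[OF fm])
  ultimately show "b \<bullet> ((\<integral>\<omega>. outer (f \<omega> - m) (f \<omega> - m) \<partial>M) *v b) \<le> (\<integral>\<omega>. (c - b \<bullet> f \<omega>)^2 \<partial>M)"
    by simp
qed

lemma orthonormal_fam_mono: "orthonormal_fam v n \<Longrightarrow> p \<le> n \<Longrightarrow> orthonormal_fam v p"
  unfolding orthonormal_fam_def by auto

lemma onf_bessel_eq:
  fixes v :: "nat \<Rightarrow> real^'n"
  assumes on: "orthonormal_fam v p"
  shows "(z - (\<Sum>i<p. (v i \<bullet> z) *\<^sub>R v i)) \<bullet> (z - (\<Sum>i<p. (v i \<bullet> z) *\<^sub>R v i)) = z \<bullet> z - (\<Sum>i<p. (v i \<bullet> z)^2)"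
proof -
  define s where "s = (\<Sum>i<p. (v i \<bullet> z) *\<^sub>R v i)"
  have sy: "s \<bullet> y = (\<Sum>i<p. (v i \<bullet> z) * (v i \<bullet> y))" for y
    unfolding s_def by (simp add: inner_sum_left)
  have vs: "v i \<bullet> s = v i \<bullet> z" if "i < p" for i
    unfolding s_def by (rule onf_coeff[OF on that])
  have zs: "s \<bullet> z = (\<Sum>i<p. (v i \<bullet> z)^2)"
    unfolding sy by (simp add: power2_eq_square)
  have ss: "s \<bullet> s = (\<Sum>i<p. (v i \<bullet> z)^2)"
    unfolding sy by (intro sum.cong refl) (simp add: vs power2_eq_square)
  have "(z - s) \<bullet> (z - s) = z \<bullet> z - 2 * (s \<bullet> z) + s \<bullet> s"
    by (simp add: inner_diff_left inner_diff_right inner_commute[of z s])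
  then show ?thesis using zs ss unfolding s_def[symmetric] by simp
qed

lemma ons_extend:
  fixes B :: "(real^'n) set"
  assumes B: "orthonormal_set B"
  obtains B' where "orthonormal_set B'" "B \<subseteq> B'" "span B' = span (B \<union> T)"
proof -
  obtain U where U0: "U \<inter> insert 0 B = {}" and po: "pairwise orthogonal (B \<union> U)"
    and sp: "span (B \<union> U) = span (B \<union> T)"
    using orthogonal_extension_strong[of B T] B unfolding orthonormal_set_def by blast
  define N where "N = (\<lambda>x. x /\<^sub>R norm x) ` (B \<union> U)"
  have nz: "u \<noteq> 0" if "u \<in> B \<union> U" for u
    using U0 that B unfolding orthonormal_set_def by auto
  have BN: "B \<subseteq> N"
  proof
    fix b assume b: "b \<in> B"
    then have "norm b = 1" using B unfolding orthonormal_set_def by auto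
    then have "b = b /\<^sub>R norm b" by simp
    then show "b \<in> N" unfolding N_def using b by blast
  qed
  have "orthonormal_set N"
    unfolding orthonormal_set_def
  proof
    show "pairwise orthogonal N"
      unfolding pairwise_def
    proof (intro ballI impI)
      fix x y assume x: "x \<in> N" and y: "y \<in> N" and xy: "x \<noteq> y"
      obtain x0 where x0: "x0 \<in> B \<union> U" "x = x0 /\<^sub>R norm x0" using x unfolding N_def by auto
      obtain y0 where y0: "y0 \<in> B \<union> U" "y = y0 /\<^sub>R norm y0" using y unfolding N_def by auto
      have "x0 \<noteq> y0" using xy x0 y0 by auto
      then have "orthogonal x0 y0" using po x0 y0 unfolding pairwise_def by auto
      then show "orthogonal x y" using x0 y0 by (simp add: orthogonal_clauses)
    qed
    show "\<forall>b\<in>N. norm b = 1" using nz unfolding N_def by auto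
  qed
  moreover have "span N = span (B \<union> U)"
  proof -
    have "N \<subseteq> span (B \<union> U)" unfolding N_def
      by (auto intro: span_base span_mul)
    moreover have "B \<union> U \<subseteq> span N"
    proof
      fix x assume xU: "x \<in> B \<union> U"
      then have "x /\<^sub>R norm x \<in> span N" unfolding N_def by (auto intro: span_base)
      then have "norm x *\<^sub>R (x /\<^sub>R norm x) \<in> span N" by (rule span_mul)
      then show "x \<in> span N" using nz[OF xU] by simp
    qed
    ultimately show ?thesis by (simp add: span_eq)
  qed
  ultimately show ?thesis using sp BN that[of N] by auto
qed

theorem proposition3:
  fixes M :: "'w measure" and Ms :: "'s measure" and Mt :: "'t measure"
    and S :: "'w \<Rightarrow> 's" and \<Theta> :: "'w \<Rightarrow> 't"
    and ub :: "'s \<Rightarrow> 't \<Rightarrow> real^'n" and wb :: "'s \<Rightarrow> real^'n"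
    and \<Omega> :: "real^'n^'n" and k :: nat
  assumes "prob_space M"
    and "S \<in> measurable M Ms" and "\<Theta> \<in> measurable M Mt"
    and "(\<lambda>\<omega>. ub (S \<omega>) (\<Theta> \<omega>)) \<in> borel_measurable M"
    and "wb \<in> borel_measurable Ms"
    and "integrable M (\<lambda>\<omega>. (norm (ub (S \<omega>) (\<Theta> \<omega>)))\<^sup>2)"
    and "integrable M (\<lambda>\<omega>. (norm (wb (S \<omega>)))\<^sup>2)"
    and "pos_def_mat \<Omega>"
    and "k < CARD('n)"
    and "eig_desc
           (\<integral>\<omega>. outer (mat_sqrt \<Omega> *v wb (S \<omega>) - (\<integral>\<omega>'. mat_sqrt \<Omega> *v wb (S \<omega>') \<partial>M))
                       (mat_sqrt \<Omega> *v wb (S \<omega>) - (\<integral>\<omega>'. mat_sqrt \<Omega> *v wb (S \<omega>') \<partial>M)) \<partial>M)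
           CARD('n)
         \<ge> eig_desc
           (\<integral>\<omega>. outer (mat_sqrt \<Omega> *v (ub (S \<omega>) (\<Theta> \<omega>) - wb (S \<omega>)))
                       (mat_sqrt \<Omega> *v (ub (S \<omega>) (\<Theta> \<omega>) - wb (S \<omega>))) \<partial>M)
           (k + 1)"
  shows "\<exists>E e A a. second_best M S Ms \<Theta> ub wb \<Omega> k E e 0 A a"
proof -
  have P: "prob_space M" by (rule assms(1))
  interpret prob_space M by (rule P)
  have pd: "pos_def_mat \<Omega>" by (rule assms(8))
  have kn: "k < CARD('n)" by (rule assms(9))
  define R where "R = mat_sqrt \<Omega>"
  have psdR: "psd_mat R" and sq: "R ** R = \<Omega>" using mat_sqrt_props[OF pd] unfolding R_def by auto
  have symR: "sym_mat R" using psdR unfolding psd_mat_def by simp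
  have injR: "inj ((*v) R)" by (rule R_inj[OF pd symR sq])
  have surjR: "surj ((*v) R)" by (rule linear_inj_imp_surj[OF matrix_vector_mul_linear injR])
  define Rinv where "Rinv c = (SOME y. R *v y = c)" for c
  have RRinv: "R *v Rinv c = c" for c
    unfolding Rinv_def using surjR by (metis (mono_tags, lifting) someI_ex surjD)
  have Rinner: "Rinv c \<bullet> (R *v y) = c \<bullet> y" for c y
    using sym_mat_inner[OF symR, of "Rinv c" y] RRinv by simp
  have Rinv_inner: "c \<bullet> Rinv l = Rinv c \<bullet> l" for c l
  proof -
    have "c \<bullet> Rinv l = (R *v Rinv c) \<bullet> Rinv l" by (simp add: RRinv)
    also have "\<dots> = Rinv c \<bullet> (R *v Rinv l)" by (rule sym_mat_inner[OF symR])
    finally show ?thesis by (simp add: RRinv)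
  qed
  have qR: "quad \<Omega> y = (R *v y) \<bullet> (R *v y)" for y by (rule quad_R[OF symR sq])

  define U where "U \<omega> = ub (S \<omega>) (\<Theta> \<omega>)" for \<omega>
  define W where "W \<omega> = wb (S \<omega>)" for \<omega>
  have sqU: "sqint M U" unfolding sqint_def U_def using assms(4,6) by simp
  have sqW: "sqint M W" unfolding sqint_def W_def
    using measurable_compose[OF assms(2) assms(5)] assms(7) by (simp add: o_def)
  define z where "z \<omega> = R *v (U \<omega> - W \<omega>)" for \<omega>
  define wt where "wt \<omega> = R *v W \<omega>" for \<omega>
  have sqz: "sqint M z" unfolding z_def by (intro sqint_mat sqint_diff sqU sqW)
  have sqwt: "sqint M wt" unfolding wt_def by (intro sqint_mat sqW)
  have zeq: "z \<omega> = R *v U \<omega> - wt \<omega>" for \<omega>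
    unfolding z_def wt_def by (simp add: matrix_vector_mult_diff_distrib)
  define m where "m = (\<integral>\<omega>. wt \<omega> \<partial>M)"
  define D where "D = (\<integral>\<omega>. outer (z \<omega>) (z \<omega>) \<partial>M)"
  define V where "V = (\<integral>\<omega>. outer (wt \<omega> - m) (wt \<omega> - m) \<partial>M)"
  have hyp: "eig_desc D (k + 1) \<le> eig_desc V CARD('n)"
    using assms(10) unfolding D_def V_def m_def wt_def z_def U_def W_def R_def .
  have symD: "sym_mat D" unfolding D_def by (rule sqint_sym[OF sqz])
  have quadD: "b \<bullet> (D *v b) = (\<integral>\<omega>. (b \<bullet> z \<omega>)^2 \<partial>M)" for b
    unfolding D_def by (rule sqint_quad[OF sqz])
  obtain v \<mu> where onv: "orthonormal_fam v CARD('n)" and eigv: "\<And>i. i < CARD('n) \<Longrightarrow> D *v v i = \<mu> i *\<^sub>R v i"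
    and decv: "\<And>i j. i \<le> j \<Longrightarrow> j < CARD('n) \<Longrightarrow> \<mu> j \<le> \<mu> i"
    by (rule spectral[OF symD]) metis
  have vv: "v i \<bullet> v i = 1" if "i < CARD('n)" for i
    using onv that unfolding orthonormal_fam_def by (simp add: norm_eq_1)
  have muD: "\<mu> i = (\<integral>\<omega>. (v i \<bullet> z \<omega>)^2 \<partial>M)" if "i < CARD('n)" for i
  proof -
    have "v i \<bullet> (D *v v i) = \<mu> i" using eigv[OF that] vv[OF that] by simp
    then show ?thesis using quadD[of "v i"] by simp
  qed
  have munn: "\<mu> i \<ge> 0" if "i < CARD('n)" for i
    unfolding muD[OF that] by (intro integral_nonneg_AE) simp
  have sqwm: "sqint M (\<lambda>\<omega>. wt \<omega> - m)" by (rule sqint_diff[OF sqwt sqint_const[OF P]])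
  have symV: "sym_mat V" unfolding V_def by (rule sqint_sym[OF sqwm])
  obtain r \<nu> where onr: "orthonormal_fam r CARD('n)" and eigr: "\<And>i. i < CARD('n) \<Longrightarrow> V *v r i = \<nu> i *\<^sub>R r i"
    and decr: "\<And>i j. i \<le> j \<Longrightarrow> j < CARD('n) \<Longrightarrow> \<nu> j \<le> \<nu> i"
    by (rule spectral[OF symV]) metis
  have e1: "eig_desc D (k + 1) = \<mu> k"
    using eig_desc_spectral[OF onv eigv decv, of "k + 1"] kn by simp
  have e2: "eig_desc V CARD('n) = \<nu> (CARD('n) - 1)"
    using eig_desc_spectral[OF onr eigr decr, of "CARD('n)"] by simp
  have Vlow: "\<mu> k \<le> b \<bullet> (V *v b)" if "norm b = 1" for b
  proof -
    have "\<nu> (CARD('n) - 1) * (b \<bullet> b) \<le> b \<bullet> (V *v b)" by (rule rayleigh_min[OF onr eigr decr])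
    moreover have "b \<bullet> b = 1" using that by (simp add: norm_eq_1)
    ultimately show ?thesis using hyp e1 e2 by simp
  qed
  have varb: "b \<bullet> (V *v b) \<le> (\<integral>\<omega>. (c - b \<bullet> wt \<omega>)^2 \<partial>M)" for b c
    using variance_bound(2)[OF P sqwt, of b c] unfolding V_def m_def .
  have varint: "integrable M (\<lambda>\<omega>. (c - b \<bullet> wt \<omega>)^2)" for b c
    by (rule variance_bound(1)[OF P sqwt])

  define OPT where "OPT = (\<Sum>i\<in>{k..<CARD('n)}. \<mu> i)"
  have OPTsplit: "(\<Sum>i<CARD('n). \<mu> i) = (\<Sum>i<k. \<mu> i) + OPT"
    unfolding OPT_def lessThan_atLeast0 using kn by (simp add: sum.atLeastLessThan_concat)
  define E0 where "E0 i = R *v v i" for i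
  define e0 where "e0 s i = E0 i \<bullet> wb s" for s i
  define A0 :: "nat \<Rightarrow> real^'n" where "A0 = (\<lambda>_. 0)"
  define a0 :: "nat \<Rightarrow> real" where "a0 = (\<lambda>_. 0)"

  have adm0: "admissible M S Ms k E0 e0 0 A0 a0"
    unfolding admissible_def
  proof (intro conjI allI impI ballI)
    fix i assume "i < k"
    show "(\<lambda>s. e0 s i) \<in> borel_measurable Ms" unfolding e0_def
      by (intro borel_measurable_inner borel_measurable_const assms(5))
  next
    fix \<omega> assume "\<omega> \<in> space M"
    have "wb (S \<omega>) \<in> feasible_set k E0 (e0 (S \<omega>)) 0 A0 a0"
      unfolding feasible_set_def e0_def by simp
    then show "feasible_set k E0 (e0 (S \<omega>)) 0 A0 a0 \<noteq> {}" by blast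
  qed
  have loss0: "expected_loss M S \<Theta> ub wb \<Omega> k E0 e0 0 A0 a0 = ennreal OPT"
  proof -
    have onk: "orthonormal_fam v k" by (rule orthonormal_fam_mono[OF onv less_imp_le[OF kn]])
    have pt: "quad \<Omega> (agent_choice \<Omega> (ub (S \<omega>) (\<Theta> \<omega>)) (feasible_set k E0 (e0 (S \<omega>)) 0 A0 a0) - wb (S \<omega>))
        = (\<Sum>i\<in>{k..<CARD('n)}. (v i \<bullet> z \<omega>)^2)" for \<omega>
    proof -
      define F where "F = feasible_set k E0 (e0 (S \<omega>)) 0 A0 a0"
      define c where "c i = v i \<bullet> z \<omega>" for i
      define ys where "ys = R *v U \<omega> - (\<Sum>i<k. c i *\<^sub>R v i)"
      define g0 where "g0 = Rinv ys"
      have Rg0: "R *v g0 = ys" unfolding g0_def by (rule RRinv)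
      have memF: "h \<in> F \<longleftrightarrow> (\<forall>i<k. v i \<bullet> (R *v h) = v i \<bullet> wt \<omega>)" for h
      proof -
        have "E0 i \<bullet> h = v i \<bullet> (R *v h)" for i unfolding E0_def by (rule sym_mat_inner[OF symR])
        moreover have "e0 (S \<omega>) i = v i \<bullet> wt \<omega>" for i
          unfolding e0_def E0_def wt_def W_def by (rule sym_mat_inner[OF symR])
        ultimately show ?thesis unfolding F_def feasible_set_def by simp
      qed
      have vys: "v i \<bullet> ys = v i \<bullet> wt \<omega>" if "i < k" for i
      proof -
        have "v i \<bullet> ys = v i \<bullet> (R *v U \<omega>) - c i"
          unfolding ys_def using onf_coeff[OF onk that, of c] by (simp add: inner_diff_right)
        also have "c i = v i \<bullet> (R *v U \<omega>) - v i \<bullet> wt \<omega>" unfolding c_def zeq by (simp add: inner_diff_right)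
        finally show ?thesis by simp
      qed
      have g0F: "g0 \<in> F" unfolding memF Rg0 using vys by simp
      have orth: "(R *v (g0 - U \<omega>)) \<bullet> (R *v (h - g0)) = 0" if hF: "h \<in> F" for h
      proof -
        have hv: "v i \<bullet> (R *v h) = v i \<bullet> wt \<omega>" if "i < k" for i using hF memF that by blast
        have "R *v (g0 - U \<omega>) = - (\<Sum>i<k. c i *\<^sub>R v i)"
          by (simp add: matrix_vector_mult_diff_distrib Rg0 ys_def)
        moreover have "R *v (h - g0) = R *v h - ys" by (simp add: matrix_vector_mult_diff_distrib Rg0)
        ultimately have "(R *v (g0 - U \<omega>)) \<bullet> (R *v (h - g0)) = - (\<Sum>i<k. c i * (v i \<bullet> (R *v h - ys)))"
          by (simp add: inner_sum_left)
        also have "\<dots> = 0" using hv vys by (simp add: inner_diff_right)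
        finally show ?thesis .
      qed
      have F_ne: "F \<noteq> {}" using g0F by blast
      have ac: "agent_choice \<Omega> (U \<omega>) F = g0"
        by (rule agent_char(3)[OF symR sq injR F_def F_ne g0F orth])
      have "quad \<Omega> (g0 - W \<omega>) = (ys - wt \<omega>) \<bullet> (ys - wt \<omega>)"
        unfolding qR by (simp add: matrix_vector_mult_diff_distrib Rg0 wt_def)
      also have "ys - wt \<omega> = z \<omega> - (\<Sum>i<k. (v i \<bullet> z \<omega>) *\<^sub>R v i)" unfolding ys_def c_def zeq by simp
      also have "(z \<omega> - (\<Sum>i<k. (v i \<bullet> z \<omega>) *\<^sub>R v i)) \<bullet> (z \<omega> - (\<Sum>i<k. (v i \<bullet> z \<omega>) *\<^sub>R v i))
          = z \<omega> \<bullet> z \<omega> - (\<Sum>i<k. (v i \<bullet> z \<omega>)^2)" by (rule onf_bessel_eq[OF onk])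
      also have "z \<omega> \<bullet> z \<omega> = (\<Sum>i<CARD('n). (v i \<bullet> z \<omega>)^2)" by (rule orthonormal_fam_parseval[OF onv])
      also have "(\<Sum>i<CARD('n). (v i \<bullet> z \<omega>)^2) - (\<Sum>i<k. (v i \<bullet> z \<omega>)^2) = (\<Sum>i\<in>{k..<CARD('n)}. (v i \<bullet> z \<omega>)^2)"
      proof -
        have "(\<Sum>i\<in>{0..<k}. (v i \<bullet> z \<omega>)^2) + (\<Sum>i\<in>{k..<CARD('n)}. (v i \<bullet> z \<omega>)^2) = (\<Sum>i\<in>{0..<CARD('n)}. (v i \<bullet> z \<omega>)^2)"
          using kn by (intro sum.atLeastLessThan_concat) auto
        then show ?thesis unfolding lessThan_atLeast0 by linarith
      qed
      finally show ?thesis using ac unfolding F_def U_def W_def by simp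
    qed
    have int: "integrable M (\<lambda>\<omega>. \<Sum>i\<in>{k..<CARD('n)}. (v i \<bullet> z \<omega>)^2)"
      by (rule Bochner_Integration.integrable_sum) (rule sqint_inner_sq[OF sqz])
    have "expected_loss M S \<Theta> ub wb \<Omega> k E0 e0 0 A0 a0 = (\<integral>\<^sup>+ \<omega>. ennreal (\<Sum>i\<in>{k..<CARD('n)}. (v i \<bullet> z \<omega>)^2) \<partial>M)"
      unfolding expected_loss_def pt ..
    also have "\<dots> = ennreal (\<integral>\<omega>. (\<Sum>i\<in>{k..<CARD('n)}. (v i \<bullet> z \<omega>)^2) \<partial>M)"
      by (rule nn_integral_eq_integral[OF int]) (simp add: sum_nonneg)
    also have "(\<integral>\<omega>. (\<Sum>i\<in>{k..<CARD('n)}. (v i \<bullet> z \<omega>)^2) \<partial>M) = (\<Sum>i\<in>{k..<CARD('n)}. (\<integral>\<omega>. (v i \<bullet> z \<omega>)^2 \<partial>M))"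
      by (rule Bochner_Integration.integral_sum) (rule sqint_inner_sq[OF sqz])
    also have "\<dots> = OPT" unfolding OPT_def using muD by (intro sum.cong) auto
    finally show ?thesis .
  qed
  have lower: "ennreal OPT \<le> expected_loss M S \<Theta> ub wb \<Omega> k E' e' m' A' a'"
    if adm: "admissible M S Ms k E' e' m' A' a'" for E' e' m' A' a'
  proof -
    define F' where "F' \<omega> = feasible_set k E' (e' (S \<omega>)) m' A' a'" for \<omega>
    have neF: "F' \<omega> \<noteq> {}" if "\<omega> \<in> space M" for \<omega>
      using adm that unfolding admissible_def F'_def by blast
    obtain \<omega>0 where \<omega>0: "\<omega>0 \<in> space M" using not_empty by blast
    obtain f00 where f00: "f00 \<in> F' \<omega>0" using neF[OF \<omega>0] by blast
    define x0 where "x0 = R *v f00"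
    define CH where "CH = (\<lambda>j. Rinv (A' j)) ` {..<m'}"
    define CG where "CG = (\<lambda>i. Rinv (E' i)) ` {..<k}"
    obtain B1 where B1s: "B1 \<subseteq> span CH" and B1po: "pairwise orthogonal B1"
      and B1n: "\<And>x. x \<in> B1 \<Longrightarrow> norm x = 1" and "independent B1" "card B1 = dim (span CH)"
      and B1sp: "span B1 = span CH"
      by (rule orthonormal_basis_subspace[OF subspace_span[of CH]]) metis
    have ons1: "orthonormal_set B1" unfolding orthonormal_set_def using B1po B1n by simp
    obtain B2 where ons2: "orthonormal_set B2" and B12: "B1 \<subseteq> B2" and B2sp: "span B2 = span (B1 \<union> CG)"
      by (rule ons_extend[OF ons1, of CG]) metis
    obtain B3 where ons3: "orthonormal_set B3" and B23: "B2 \<subseteq> B3" and B3sp': "span B3 = span (B2 \<union> UNIV)"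
      by (rule ons_extend[OF ons2, of UNIV]) metis
    have B3sp: "span B3 = UNIV" using B3sp' by simp
    have fin1: "finite B1" and fin2: "finite B2" and fin3: "finite B3" and c2n: "card B2 \<le> CARD('n)"
      using ons_finite_card[OF ons1] ons_finite_card[OF ons2] ons_finite_card[OF ons3] by auto
    have cardB2: "card B2 \<le> card B1 + k"
    proof -
      have "0 \<notin> B2" using ons2 unfolding orthonormal_set_def by auto
      then have "independent B2" using ons2 unfolding orthonormal_set_def
        by (intro pairwise_orthogonal_independent) auto
      then have "card B2 = dim (span B2)" using dim_span_eq_card_independent[of B2] by simp
      also have "\<dots> = dim (B1 \<union> CG)" unfolding B2sp by (rule dim_span)
      also have "\<dots> \<le> card (B1 \<union> CG)" by (rule dim_le_card') (simp add: fin1 CG_def)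
      also have "\<dots> \<le> card B1 + card CG" by (rule card_Un_le)
      also have "card CG \<le> k" unfolding CG_def by (metis card_image_le card_lessThan finite_lessThan)
      finally show ?thesis by simp
    qed
    have CHs: "c \<in> span B2" if "c \<in> CH" for c
      using that span_base[of c CH] B1sp span_mono[OF B12] by blast
    have CGs: "c \<in> span B2" if "c \<in> CG" for c
      using that unfolding B2sp by (auto intro: span_base)
    have perp: "b \<bullet> y = 0" if b: "b \<in> B3 - B2" and y: "y \<in> span B2" for b y
    proof -
      have "orthogonal b y"
      proof (rule orthogonal_to_span[OF y])
        fix y'
        assume y'B: "y' \<in> B2"
        then have "b \<noteq> y'" "y' \<in> B3" using b B23 by auto
        then show "orthogonal b y'" using b ons3 unfolding orthonormal_set_def pairwise_def by blast
      qed
      then show ?thesis by (simp add: orthogonal_def)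
    qed
    define G where "G \<omega> = (\<Sum>b\<in>B3 - B2. (b \<bullet> z \<omega>)^2) + (\<Sum>b\<in>B1. (b \<bullet> x0 - b \<bullet> wt \<omega>)^2)" for \<omega>
    have ptw: "ennreal (G \<omega>) \<le> ennreal (quad \<Omega> (agent_choice \<Omega> (ub (S \<omega>) (\<Theta> \<omega>)) (feasible_set k E' (e' (S \<omega>)) m' A' a') - wb (S \<omega>)))"
      if \<omega>: "\<omega> \<in> space M" for \<omega>
    proof -
      define ac where "ac = agent_choice \<Omega> (U \<omega>) (F' \<omega>)"
      define x where "x = R *v ac"
      have acF: "ac \<in> F' \<omega>" unfolding ac_def by (rule agent_char(1)[OF symR sq injR F'_def neF[OF \<omega>]])
      have ortho: "(R *v (ac - U \<omega>)) \<bullet> (R *v (g - ac)) = 0" if "g \<in> F' \<omega>" for g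
        unfolding ac_def by (rule agent_char(2)[OF symR sq injR F'_def neF[OF \<omega>] that])
      have pa: "(x - R *v U \<omega>) \<bullet> b = 0" if b: "b \<in> B3 - B2" for b
      proof -
        have gF: "ac + Rinv b \<in> F' \<omega>"
        proof -
          have "E' i \<bullet> Rinv b = 0" if "i < k" for i
          proof -
            have "Rinv (E' i) \<in> span B2" using CGs that unfolding CG_def by blast
            then have b0: "b \<bullet> Rinv (E' i) = 0" by (rule perp[OF b])
            have "E' i \<bullet> Rinv b = Rinv (E' i) \<bullet> b" by (rule Rinv_inner)
            also have "\<dots> = b \<bullet> Rinv (E' i)" by (rule inner_commute)
            finally show ?thesis using b0 by simp
          qed
          moreover have "A' j \<bullet> Rinv b = 0" if "j < m'" for j
          proof -
            have "Rinv (A' j) \<in> span B2" using CHs that unfolding CH_def by blast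
            then have b0: "b \<bullet> Rinv (A' j) = 0" by (rule perp[OF b])
            have "A' j \<bullet> Rinv b = Rinv (A' j) \<bullet> b" by (rule Rinv_inner)
            also have "\<dots> = b \<bullet> Rinv (A' j)" by (rule inner_commute)
            finally show ?thesis using b0 by simp
          qed
          ultimately show ?thesis using acF unfolding F'_def feasible_set_def by (simp add: inner_add_right)
        qed
        have "(R *v (ac - U \<omega>)) \<bullet> (R *v (ac + Rinv b - ac)) = 0" by (rule ortho[OF gF])
        then show ?thesis unfolding x_def by (simp add: RRinv matrix_vector_mult_diff_distrib)
      qed
      have pb: "b \<bullet> x = b \<bullet> x0" if b: "b \<in> B1" for b
      proof -
        have oc: "orthogonal (x - x0) c" if c: "c \<in> CH" for c
        proof -
          obtain j where j: "j < m'" and cj: "c = Rinv (A' j)" using c unfolding CH_def by auto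
          have "c \<bullet> x = a' j" using acF j unfolding cj x_def Rinner F'_def feasible_set_def by simp
          moreover have "c \<bullet> x0 = a' j" using f00 j unfolding cj x0_def Rinner F'_def feasible_set_def by simp
          ultimately show ?thesis unfolding orthogonal_def by (simp add: inner_diff_left inner_diff_right inner_commute[of _ c])
        qed
        have "b \<in> span CH" using B1s b by auto
        then have "orthogonal (x - x0) b" by (rule orthogonal_to_span) (rule oc)
        then show ?thesis unfolding orthogonal_def by (simp add: inner_diff_left inner_diff_right inner_commute[of _ b])
      qed
      define f where "f b = ((x - wt \<omega>) \<bullet> b)^2" for b
      have "quad \<Omega> (ac - W \<omega>) = (x - wt \<omega>) \<bullet> (x - wt \<omega>)"
        unfolding qR x_def wt_def by (simp add: matrix_vector_mult_diff_distrib)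
      also have "\<dots> = (\<Sum>b\<in>B3. f b)" unfolding f_def by (rule ons_parseval[OF ons3 B3sp])
      also have "\<dots> = (\<Sum>b\<in>B3 - B2. f b) + (\<Sum>b\<in>B2. f b)"
        using sum.subset_diff[OF B23 fin3] by simp
      finally have eqq: "quad \<Omega> (ac - W \<omega>) = (\<Sum>b\<in>B3 - B2. f b) + (\<Sum>b\<in>B2. f b)" .
      have "(\<Sum>b\<in>B1. f b) \<le> (\<Sum>b\<in>B2. f b)"
        using fin2 B12 by (intro sum_mono2) (auto simp: f_def)
      then have ge: "(\<Sum>b\<in>B3 - B2. f b) + (\<Sum>b\<in>B1. f b) \<le> quad \<Omega> (ac - W \<omega>)" using eqq by simp
      have "(\<Sum>b\<in>B3 - B2. f b) = (\<Sum>b\<in>B3 - B2. (b \<bullet> z \<omega>)^2)"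
      proof (intro sum.cong refl)
        fix b assume b: "b \<in> B3 - B2"
        have "(x - wt \<omega>) \<bullet> b = (x - R *v U \<omega>) \<bullet> b + z \<omega> \<bullet> b"
          unfolding zeq by (simp add: inner_diff_left)
        then show "f b = (b \<bullet> z \<omega>)^2" unfolding f_def using pa[OF b] by (simp add: inner_commute)
      qed
      moreover have "(\<Sum>b\<in>B1. f b) = (\<Sum>b\<in>B1. (b \<bullet> x0 - b \<bullet> wt \<omega>)^2)"
      proof (intro sum.cong refl)
        fix b assume b: "b \<in> B1"
        show "f b = (b \<bullet> x0 - b \<bullet> wt \<omega>)^2" unfolding f_def using pb[OF b]
          by (simp add: inner_diff_left inner_diff_right inner_commute[of _ b])
      qed
      ultimately have "G \<omega> \<le> quad \<Omega> (ac - W \<omega>)" using ge unfolding G_def by simp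
      then show ?thesis unfolding ac_def U_def W_def F'_def by (simp add: ennreal_leI)
    qed
    have int1: "integrable M (\<lambda>\<omega>. \<Sum>b\<in>B3 - B2. (b \<bullet> z \<omega>)^2)"
      by (rule Bochner_Integration.integrable_sum) (rule sqint_inner_sq[OF sqz])
    have int2: "integrable M (\<lambda>\<omega>. \<Sum>b\<in>B1. (b \<bullet> x0 - b \<bullet> wt \<omega>)^2)"
      by (rule Bochner_Integration.integrable_sum) (rule varint)
    have Gint: "integrable M G" unfolding G_def using int1 int2 by simp
    have intG: "(\<integral>\<omega>. G \<omega> \<partial>M) = (\<Sum>b\<in>B3 - B2. b \<bullet> (D *v b)) + (\<Sum>b\<in>B1. (\<integral>\<omega>. (b \<bullet> x0 - b \<bullet> wt \<omega>)^2 \<partial>M))"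
    proof -
      have "(\<integral>\<omega>. G \<omega> \<partial>M) = (\<integral>\<omega>. (\<Sum>b\<in>B3 - B2. (b \<bullet> z \<omega>)^2) \<partial>M) + (\<integral>\<omega>. (\<Sum>b\<in>B1. (b \<bullet> x0 - b \<bullet> wt \<omega>)^2) \<partial>M)"
        unfolding G_def using int1 int2 by (rule Bochner_Integration.integral_add)
      also have "(\<integral>\<omega>. (\<Sum>b\<in>B3 - B2. (b \<bullet> z \<omega>)^2) \<partial>M) = (\<Sum>b\<in>B3 - B2. (\<integral>\<omega>. (b \<bullet> z \<omega>)^2 \<partial>M))"
        by (rule Bochner_Integration.integral_sum) (rule sqint_inner_sq[OF sqz])
      also have "(\<integral>\<omega>. (\<Sum>b\<in>B1. (b \<bullet> x0 - b \<bullet> wt \<omega>)^2) \<partial>M) = (\<Sum>b\<in>B1. (\<integral>\<omega>. (b \<bullet> x0 - b \<bullet> wt \<omega>)^2 \<partial>M))"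
        by (rule Bochner_Integration.integral_sum) (rule varint)
      finally show ?thesis by (simp add: quadD)
    qed
    have s1: "(\<Sum>b\<in>B3 - B2. b \<bullet> (D *v b)) \<ge> (\<Sum>i<CARD('n). \<mu> i) - ((\<Sum>i<k. \<mu> i) + real (card B1) * \<mu> k)"
    proof -
      have "(\<Sum>b\<in>B3 - B2. b \<bullet> (D *v b)) = (\<Sum>b\<in>B3. b \<bullet> (D *v b)) - (\<Sum>b\<in>B2. b \<bullet> (D *v b))"
        by (rule sum_diff[OF fin3 B23])
      moreover have "(\<Sum>b\<in>B3. b \<bullet> (D *v b)) = (\<Sum>i<CARD('n). \<mu> i)"
        by (rule trace_ons[OF onv eigv ons3 B3sp])
      moreover have "(\<Sum>b\<in>B2. b \<bullet> (D *v b)) \<le> (\<Sum>i<card B2. \<mu> i)"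
        by (rule ky_fan[OF onv eigv decv ons2])
      moreover have "(\<Sum>i<card B2. \<mu> i) \<le> (\<Sum>i<k. \<mu> i) + real (card B1) * \<mu> k"
        by (rule sum_top_bound[OF cardB2 c2n kn munn decv])
      ultimately show ?thesis by linarith
    qed
    have s2: "(\<Sum>b\<in>B1. (\<integral>\<omega>. (b \<bullet> x0 - b \<bullet> wt \<omega>)^2 \<partial>M)) \<ge> real (card B1) * \<mu> k"
    proof -
      have "real (card B1) * \<mu> k \<le> (\<Sum>b\<in>B1. b \<bullet> (V *v b))"
        using Vlow B1n by (intro sum_bounded_below) auto
      also have "\<dots> \<le> (\<Sum>b\<in>B1. (\<integral>\<omega>. (b \<bullet> x0 - b \<bullet> wt \<omega>)^2 \<partial>M))"
        by (intro sum_mono varb)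
      finally show ?thesis .
    qed
    have "OPT \<le> (\<integral>\<omega>. G \<omega> \<partial>M)" unfolding intG using s1 s2 OPTsplit by linarith
    then have "ennreal OPT \<le> ennreal (\<integral>\<omega>. G \<omega> \<partial>M)" by (rule ennreal_leI)
    also have "\<dots> = (\<integral>\<^sup>+ \<omega>. ennreal (G \<omega>) \<partial>M)"
      by (rule nn_integral_eq_integral[OF Gint, symmetric]) (simp add: G_def sum_nonneg)
    also have "\<dots> \<le> expected_loss M S \<Theta> ub wb \<Omega> k E' e' m' A' a'"
      unfolding expected_loss_def by (rule nn_integral_mono) (rule ptw)
    finally show ?thesis .
  qed
  show ?thesis unfolding second_best_def
  proof (intro exI conjI allI impI)
    show "admissible M S Ms k E0 e0 0 A0 a0" by (rule adm0)
    fix E' :: "nat \<Rightarrow> real^'n" and e' :: "'s \<Rightarrow> nat \<Rightarrow> real" and m' :: nat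
      and A' :: "nat \<Rightarrow> real^'n" and a' :: "nat \<Rightarrow> real"
    assume "admissible M S Ms k E' e' m' A' a'"
    then show "expected_loss M S \<Theta> ub wb \<Omega> k E0 e0 0 A0 a0 \<le> expected_loss M S \<Theta> ub wb \<Omega> k E' e' m' A' a'"
      using loss0 lower by simp
  qed
qed

end
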